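(* Let $t=(I_2|e_2)\in\mathrm E(2)$, $\mathcal G=\langle t\rangle$, $x_0=0\in\mathbb R^2$, and let $\mathcal R\subset\mathcal G$ have Property 2 (e.g. $\mathcal R=\{\mathrm{id},t,t^2\}$). Then the seminorms $\|\cdot\|_{\mathcal R,0,0}$ and $u\mapsto\|\nabla_{\mathcal R}u\|_2$ are equivalent on $U_{\mathrm{per}}$, and there exist constants $C,c>0$ such that for all $u\in U_{\mathrm{per}}$ \[c\|\nabla_{\mathcal R}u\|_2^2\le\sum_{k\in[0,1)\cap\mathbb Q}|k|_1^2\,|\hat u(\chi_k)|^2\le C\|\nabla_{\mathcal R}u\|_2^2\] and \[c\|u\|_{\mathcal R}^2\le\sum_{k\in[0,1)\cap\mathbb Q}\Big(|k|_1^4|\hat u_1(\chi_k)|^2+|k|_1^2|\hat u_2(\chi_k)|^2\Big)\le C\|u\|_{\mathcal R}^2.\]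
   Context: Elements of $\mathrm E(2)$ are pairs $(A|b)$ acting by $x\mapsto Ax+b$; $\mathrm{rot}(A|b)=A$. Here $\mathcal G=\{t^n:n\in\mathbb Z\}$, $t^n\cdot x=x+ne_2$, and $\mathrm{rot}(t^n)=I_2$. $U_{\mathrm{per}}$ is the set of maps $u=(u_1,u_2):\mathcal G\to\mathbb R^2$ for which there is $N\in\mathbb N$ with $u(t^{n+N})=u(t^n)$ for all $n$; for such $N$ let $\mathcal C_N=\{t^0,\dots,t^{N-1}\}$. For $\mathcal R\subset\mathcal G$ finite, $(\mathbb R^2)^{\mathcal R}$ carries the Euclidean norm; $U_{\mathrm{iso}}(\mathcal R)$ is the set of $v:\mathcal R\to\mathbb R^2$ with $a\in\mathbb R^2$, $S\in\mathrm{Skew}(2)$ such that $\mathrm{rot}(g)v(g)=a+S(g\cdot x_0-x_0)$ for $g\in\mathcal R$, and $U_{\mathrm{iso},0,0}(\mathcal R)$ the set of $v$ with $\mathrm{rot}(g)v(g)=a$ for some $a\in\mathbb R^2$ and all $g\in\mathcal R$. $\|u\|_{\mathcal R}$ (resp. $\|u\|_{\mathcal R,0,0}$) $=\big(\frac1N\sum_{g\in\mathcal C_N}\mathrm{dist}(u(g\,\cdot)|_{\mathcal R},U)^2\big)^{1/2}$ with $U=U_{\mathrm{iso}}(\mathcal R)$ (resp. $U_{\mathrm{iso},0,0}(\mathcal R)$); $\|\nabla_{\mathcal R}u\|_2=\big(\frac1N\sum_{g\in\mathcal C_N}\sum_{h\in\mathcal R}|u(gh)-\mathrm{rot}(h)^Tu(g)|^2\big)^{1/2}$.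 Property 2: $\mathcal R$ is finite and there are $\mathcal R',\mathcal R''\subset\mathcal G$ with $\mathrm{id}\in\mathcal R'$, $\mathcal R'$ generating $\mathcal G$, $\mathcal R''$ finite with $\mathrm{id}\in\mathcal R''$ and affine hull of $\mathcal R''\cdot x_0$ equal to that of $\mathcal G\cdot x_0$, and $\{gh:g\in\mathcal R',h\in\mathcal R''\}\subset\mathcal R$. For $k\in[0,1)$, $\chi_k(t^n)=e^{2\pi\mathrm i nk}$. For $k\in[0,1)\cap\mathbb Q$ and $u\in U_{\mathrm{per}}$, $\hat u(\chi_k)=\frac1M\sum_{n=0}^{M-1}e^{2\pi\mathrm i nk}u(t^n)\in\mathbb C^2$, where $M\in\mathbb N$ is any integer with $Mk\in\mathbb Z$ and $u(t^{n+M})=u(t^n)$ for all $n$ (independent of the choice); $\hat u_1,\hat u_2$ are its components. $|k|_1=\mathrm{dist}(k,\mathbb Z)$. *)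

theory Defs
  imports "HOL-Analysis.Analysis"
begin

type_synonym E2 = "(real^2^2) \<times> (real^2)"

definition act :: "E2 \<Rightarrow> real^2 \<Rightarrow> real^2" where
  "act g x = fst g *v x + snd g"

definition rot :: "E2 \<Rightarrow> real^2^2" where
  "rot g = fst g"

definition e2 :: "real^2" where
  "e2 = vector [0, 1]"

text \<open>The group G = {t^n}, with t = (I_2 | e_2); t^n is indexed by the integer n,
  so the group product t^m t^n corresponds to m + n.\<close>
definition tpow :: "int \<Rightarrow> E2" where
  "tpow n = (mat 1, of_int n *\<^sub>R e2)"

definition x0 :: "real^2" where
  "x0 = 0"

text \<open>Periodic displacement fields u : G \<rightarrow> R^2 (u n stands for u(t^n)).\<close>
definition Uper :: "(int \<Rightarrow> real^2) set" where
  "Uper = {u. \<exists>N::nat. N > 0 \<and> (\<forall>n. u (n + int N) = u n)}"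

definition per :: "(int \<Rightarrow> real^2) \<Rightarrow> nat" where
  "per u = (LEAST N::nat. N > 0 \<and> (\<forall>n. u (n + int N) = u n))"

definition Skew2 :: "(real^2^2) set" where
  "Skew2 = {S. transpose S = - S}"

definition Uiso :: "int set \<Rightarrow> (int \<Rightarrow> real^2) set" where
  "Uiso R = {v. \<exists>a S. S \<in> Skew2 \<and>
      (\<forall>g\<in>R. rot (tpow g) *v v g = a + S *v (act (tpow g) x0 - x0))}"

definition Uiso00 :: "int set \<Rightarrow> (int \<Rightarrow> real^2) set" where
  "Uiso00 R = {v. \<exists>a. \<forall>g\<in>R. rot (tpow g) *v v g = a}"

text \<open>Euclidean distance in (R^2)^R from v to a set U (only values on R matter).\<close>
definition distR :: "int set \<Rightarrow> (int \<Rightarrow> real^2) \<Rightarrow> (int \<Rightarrow> real^2) set \<Rightarrow> real" where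
  "distR R v U = Inf ((\<lambda>w. sqrt (\<Sum>h\<in>R. (norm (v h - w h))\<^sup>2)) ` U)"

definition seminormU :: "int set \<Rightarrow> (int \<Rightarrow> real^2) set \<Rightarrow> (int \<Rightarrow> real^2) \<Rightarrow> real" where
  "seminormU R U u = (let N = per u in
     sqrt ((1 / real N) * (\<Sum>g<N. (distR R (\<lambda>h. u (int g + h)) U)\<^sup>2)))"

definition normR :: "int set \<Rightarrow> (int \<Rightarrow> real^2) \<Rightarrow> real" where
  "normR R u = seminormU R (Uiso R) u"

definition normR00 :: "int set \<Rightarrow> (int \<Rightarrow> real^2) \<Rightarrow> real" where
  "normR00 R u = seminormU R (Uiso00 R) u"

definition gradnorm :: "int set \<Rightarrow> (int \<Rightarrow> real^2) \<Rightarrow> real" where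
  "gradnorm R u = (let N = per u in
     sqrt ((1 / real N) * (\<Sum>g<N. \<Sum>h\<in>R.
        (norm (u (int g + h) - transpose (rot (tpow h)) *v u (int g)))\<^sup>2)))"

definition generates :: "int set \<Rightarrow> bool" where
  "generates A \<longleftrightarrow> (\<forall>S. 0 \<in> S \<and> A \<subseteq> S \<and> (\<forall>x\<in>S. \<forall>y\<in>S. x + y \<in> S \<and> - x \<in> S)
                      \<longrightarrow> S = UNIV)"

definition Property2 :: "int set \<Rightarrow> bool" where
  "Property2 R \<longleftrightarrow> finite R \<and>
     (\<exists>R' R''. 0 \<in> R' \<and> generates R' \<and> finite R'' \<and> 0 \<in> R'' \<and>
        affine hull ((\<lambda>n. act (tpow n) x0) ` R'') = affine hull (range (\<lambda>n. act (tpow n) x0)) \<and>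
        {g + h | g h. g \<in> R' \<and> h \<in> R''} \<subseteq> R)"

definition uhat :: "(int \<Rightarrow> real^2) \<Rightarrow> real \<Rightarrow> complex^2" where
  "uhat u k = (let M = (LEAST M::nat. M > 0 \<and> real M * k \<in> \<int> \<and> (\<forall>n. u (n + int M) = u n)) in
     (\<chi> i. (1 / of_nat M) * (\<Sum>n<M. exp (2 * pi * \<i> * of_nat n * of_real k) * of_real (u (int n) $ i))))"

definition Qk :: "real set" where
  "Qk = {k. k \<in> \<rat> \<and> 0 \<le> k \<and> k < 1}"

definition absk :: "real \<Rightarrow> real" where
  "absk k = infdist k \<int>"

end

theory Submission
  imports Defs
begin

definition ee :: "real \<Rightarrow> complex" where "ee x = cis (2 * pi * x)"

lemma ee_add: "ee (x + y) = ee x * ee y"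
  by (simp add: ee_def cis_mult distrib_left)

lemma norm_ee[simp]: "cmod (ee x) = 1"
  by (simp add: ee_def)

lemma ee_int[simp]: "x \<in> \<int> \<Longrightarrow> ee x = 1"
  by (simp add: ee_def)

lemma ee_zero[simp]: "ee 0 = 1" by (simp add: ee_def)

lemma cnj_ee: "cnj (ee x) = ee (- x)"
  by (simp add: ee_def cis_cnj)

lemma ee_pow: "ee x ^ n = ee (real n * x)"
proof -
  have "ee x ^ n = cis (real n * (2 * pi * x))" unfolding ee_def by (rule Complex.DeMoivre)
  then show ?thesis unfolding ee_def by (simp add: algebra_simps)
qed

lemma ee_eq_1: "ee x = 1 \<longleftrightarrow> x \<in> \<int>"
proof
  assume "ee x = 1"
  then have "cos (2 * pi * x) = 1" unfolding ee_def by (metis complex.sel(1) cis.sel(1) one_complex.sel(1))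
  then obtain n :: int where "2 * pi * x = real_of_int n * 2 * pi" using cos_one_2pi_int by blast
  then have "x = n" by simp
  then show "x \<in> \<int>" by simp
qed simp

lemma ee_minus_mult: "ee x * ee (- x) = 1"
  by (simp flip: ee_add)

lemma periodic_mult_nat:
  assumes "\<forall>m. P (m + int N) = P m"
  shows "P (n + int N * int q) = P n"
proof (induction q)
  case 0 then show ?case by simp
next
  case (Suc q)
  have eq: "n + int N * int (Suc q) = (n + int N * int q) + int N" by (simp add: algebra_simps)
  show ?case unfolding eq using assms Suc by simp
qed

lemma periodic_mult:
  assumes "\<forall>m. P (m + int N) = P m"
  shows "P (n + int N * q) = P n"
proof (cases "q \<ge> 0")
  case True
  define q' where "q' = nat q"
  have "q = int q'" using True unfolding q'_def by simp
  then show ?thesis using periodic_mult_nat[OF assms] by simp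
next
  case False
  define q' where "q' = nat (- q)"
  have q': "q = - int q'" using False unfolding q'_def by simp
  have "P (n + int N * q) = P (n + int N * q + int N * int q')"
    using periodic_mult_nat[OF assms, of "n + int N * q" q'] by simp
  also have "\<dots> = P n" using q' by simp
  finally show ?thesis .
qed

lemma periodic_mod:
  assumes "\<forall>m. P (m + int N) = P m"
  shows "P n = P (n mod int N)"
proof -
  have "n = n mod int N + int N * (n div int N)" by simp
  then show ?thesis using periodic_mult[OF assms, of "n mod int N" "n div int N"] by metis
qed

lemma sum_shift_periodic:
  fixes P :: "int \<Rightarrow> 'a::comm_monoid_add"
  assumes N: "N > 0" and per: "\<forall>m. P (m + int N) = P m"
  shows "(\<Sum>n<N. P (int n + s)) = (\<Sum>n<N. P (int n))"
proof -
  obtain M where M: "N = Suc M" using N not0_implies_Suc by blast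
  have step: "(\<Sum>n<N. P (int n + (s + 1))) = (\<Sum>n<N. P (int n + s))" for s
  proof -
    have 1: "(\<Sum>n<Suc M. P (int n + s)) = P (int 0 + s) + (\<Sum>n<M. P (int (Suc n) + s))"
      by (simp only: sum.lessThan_Suc_shift)
    have 2: "(\<Sum>n<M. P (int (Suc n) + s)) = (\<Sum>n<M. P (int n + (s + 1)))"
      by (intro sum.cong refl) (simp add: ac_simps)
    have 3: "(\<Sum>n<Suc M. P (int n + (s + 1))) = (\<Sum>n<M. P (int n + (s + 1))) + P (int M + (s + 1))"
      by (simp only: sum.lessThan_Suc)
    have 4: "P (int M + (s + 1)) = P s" using per[rule_format, of s] M
      by (simp add: add.commute add.left_commute)
    show ?thesis unfolding M 1 2 3 4 by (simp add: add.commute)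
  qed
  show ?thesis
  proof (induction s rule: int_induct[where k = 0])
    case base then show ?case by simp
  next
    case (step1 i) then show ?case using step[of i] by (rule_tac trans) auto
  next
    case (step2 i)
    have "(\<Sum>n<N. P (int n + (i - 1 + 1))) = (\<Sum>n<N. P (int n + (i - 1)))" by (rule step)
    then have "(\<Sum>n<N. P (int n + i)) = (\<Sum>n<N. P (int n + (i - 1)))" by simp
    then show ?case using step2.IH by metis
  qed
qed

definition FT :: "nat \<Rightarrow> (int \<Rightarrow> complex) \<Rightarrow> real \<Rightarrow> complex" where
  "FT N f k = (1 / of_nat N) * (\<Sum>n<N. ee (real n * k) * f (int n))"

lemma FT_shift:
  assumes N: "N > 0" and per: "\<forall>m. f (m + int N) = f m" and k: "real N * k \<in> \<int>"
  shows "FT N (\<lambda>n. f (n + s)) k = ee (- (of_int s * k)) * FT N f k"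
proof -
  define P where "P m = ee (of_int m * k) * f m" for m
  have perP: "\<forall>m. P (m + int N) = P m"
  proof
    fix m
    have "of_int (m + int N) * k = of_int m * k + real N * k" by (simp add: algebra_simps)
    then have "ee (of_int (m + int N) * k) = ee (of_int m * k) * ee (real N * k)"
      by (metis ee_add)
    also have "ee (real N * k) = 1" using k by (rule ee_int)
    finally show "P (m + int N) = P m" unfolding P_def using per by simp
  qed
  have "(\<Sum>n<N. ee (real n * k) * f (int n + s)) = (\<Sum>n<N. ee (- (of_int s * k)) * P (int n + s))"
  proof (rule sum.cong[OF refl])
    fix n
    have "real n * k = - (of_int s * k) + of_int (int n + s) * k" by (simp add: algebra_simps)
    then have "ee (real n * k) = ee (- (of_int s * k)) * ee (of_int (int n + s) * k)"
      by (metis ee_add)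
    then show "ee (real n * k) * f (int n + s) = ee (- (of_int s * k)) * P (int n + s)"
      unfolding P_def by simp
  qed
  also have "\<dots> = ee (- (of_int s * k)) * (\<Sum>n<N. P (int n + s))"
    by (rule sum_distrib_left[symmetric])
  also have "\<dots> = ee (- (of_int s * k)) * (\<Sum>n<N. P (int n))"
    by (simp only: sum_shift_periodic[OF N perP])
  also have "(\<Sum>n<N. P (int n)) = (\<Sum>n<N. ee (real n * k) * f (int n))"
    unfolding P_def by simp
  finally show ?thesis unfolding FT_def by (simp add: algebra_simps)
qed

lemma FT_diff: "FT N (\<lambda>n. f n - g n) k = FT N f k - FT N g k"
  unfolding FT_def by (simp add: sum_subtractf right_diff_distrib algebra_simps)

lemma FT_scale: "FT N (\<lambda>n. c * f n) k = c * FT N f k"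
  unfolding FT_def by (simp add: sum_distrib_left algebra_simps)

lemma orth:
  assumes "n < N" "m < N"
  shows "(\<Sum>j<N. ee ((real n - real m) * real j / real N)) = (if n = m then of_nat N else 0)"
proof (cases "n = m")
  case True then show ?thesis by simp
next
  case False
  define \<omega> where "\<omega> = ee ((real n - real m) / real N)"
  have N: "N > 0" using assms by simp
  have 1: "ee ((real n - real m) * real j / real N) = \<omega> ^ j" for j
    unfolding \<omega>_def ee_pow by (simp add: algebra_simps)
  have "\<omega> ^ N = ee (real n - real m)" unfolding \<omega>_def ee_pow using N by simp
  also have "\<dots> = 1" by (rule ee_int) (simp add: Ints_diff)
  finally have wN: "\<omega> ^ N = 1" .
  have "\<omega> \<noteq> 1"
  proof
    assume "\<omega> = 1"
    then have "(real n - real m) / real N \<in> \<int>" unfolding \<omega>_def ee_eq_1 .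
    then obtain z :: int where z: "(real n - real m) / real N = of_int z" by (metis Ints_cases)
    then have z2: "real n - real m = of_int z * real N" using N by (simp add: field_simps)
    have "\<bar>of_int z * real N\<bar> < real N" using assms z2[symmetric] by linarith
    then have "\<bar>of_int z\<bar> < (1::real)" using N by (simp add: abs_mult)
    then have "z = 0" by linarith
    then show False using z2 False by simp
  qed
  have "(\<Sum>j<N. \<omega> ^ j) = 0" using geometric_sum[OF \<open>\<omega> \<noteq> 1\<close>, of N] wN by simp
  then show ?thesis using False 1 by simp
qed


lemma cnj_FT: "cnj (FT N f k) = (1 / of_nat N) * (\<Sum>m<N. ee (- (real m * k)) * cnj (f (int m)))"
  unfolding FT_def by (simp add: cnj_ee)

lemma parseval:
  assumes N: "N > 0"
  shows "(\<Sum>j<N. (cmod (FT N f (real j / real N)))\<^sup>2) = (1 / real N) * (\<Sum>n<N. (cmod (f (int n)))\<^sup>2)"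
proof -
  let ?c = "\<lambda>n m. f (int n) * cnj (f (int m))"
  have prod: "FT N f (real j / real N) * cnj (FT N f (real j / real N)) =
     (1 / of_nat N)^2 * (\<Sum>n<N. \<Sum>m<N. ee ((real n - real m) * real j / real N) * ?c n m)" for j
  proof -
    have "FT N f (real j / real N) * cnj (FT N f (real j / real N)) =
      (1 / of_nat N)^2 * ((\<Sum>n<N. ee (real n * (real j / real N)) * f (int n)) *
         (\<Sum>m<N. ee (- (real m * (real j / real N))) * cnj (f (int m))))"
      unfolding cnj_FT unfolding FT_def by (simp add: power2_eq_square)
    also have "(\<Sum>n<N. ee (real n * (real j / real N)) * f (int n)) *
         (\<Sum>m<N. ee (- (real m * (real j / real N))) * cnj (f (int m))) =
       (\<Sum>n<N. \<Sum>m<N. (ee (real n * (real j / real N)) * f (int n)) *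
         (ee (- (real m * (real j / real N))) * cnj (f (int m))))"
      by (rule sum_product)
    also have "\<dots> = (\<Sum>n<N. \<Sum>m<N. ee ((real n - real m) * real j / real N) * ?c n m)"
    proof (intro sum.cong refl)
      fix n m
      have "(real n - real m) * real j / real N = real n * (real j / real N) + - (real m * (real j / real N))"
        by (simp add: algebra_simps diff_divide_distrib)
      then have "ee ((real n - real m) * real j / real N) = ee (real n * (real j / real N)) * ee (- (real m * (real j / real N)))"
        by (metis ee_add)
      then show "(ee (real n * (real j / real N)) * f (int n)) *
         (ee (- (real m * (real j / real N))) * cnj (f (int m))) = ee ((real n - real m) * real j / real N) * ?c n m"
        by (simp add: algebra_simps)
    qed
    finally show ?thesis .
  qed
  have "complex_of_real (\<Sum>j<N. (cmod (FT N f (real j / real N)))\<^sup>2) =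
      (\<Sum>j<N. FT N f (real j / real N) * cnj (FT N f (real j / real N)))"
    by (simp only: of_real_sum complex_norm_square)
  also have "\<dots> = (1 / of_nat N)^2 * (\<Sum>j<N. \<Sum>n<N. \<Sum>m<N. ee ((real n - real m) * real j / real N) * ?c n m)"
    by (simp add: prod sum_distrib_left)
  also have "(\<Sum>j<N. \<Sum>n<N. \<Sum>m<N. ee ((real n - real m) * real j / real N) * ?c n m) =
      (\<Sum>n<N. \<Sum>m<N. \<Sum>j<N. ee ((real n - real m) * real j / real N) * ?c n m)"
    by (subst sum.swap, rule sum.cong[OF refl], rule sum.swap)
  also have "\<dots> = (\<Sum>n<N. \<Sum>m<N. (if n = m then of_nat N else 0) * ?c n m)"
    by (intro sum.cong refl) (simp add: sum_distrib_right[symmetric] orth)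
  also have "\<dots> = (\<Sum>n<N. of_nat N * ?c n n)"
  proof (intro sum.cong refl)
    fix n assume "n \<in> {..<N}"
    have "(\<Sum>m<N. (if n = m then of_nat N else 0) * ?c n m) = (\<Sum>m<N. (if n = m then of_nat N * ?c n m else 0))"
      by (intro sum.cong refl) simp
    also have "\<dots> = of_nat N * ?c n n" using \<open>n \<in> {..<N}\<close> by (simp add: sum.delta)
    finally show "(\<Sum>m<N. (if n = m then of_nat N else 0) * ?c n m) = of_nat N * ?c n n" .
  qed
  also have "(1 / of_nat N)^2 * \<dots> = (1 / of_nat N) * (\<Sum>n<N. ?c n n)"
    using N by (simp add: sum_distrib_left[symmetric] power2_eq_square)
  also have "\<dots> = complex_of_real ((1 / real N) * (\<Sum>n<N. (cmod (f (int n)))\<^sup>2))"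
    by (simp only: of_real_mult of_real_sum complex_norm_square of_real_divide of_real_1 of_real_of_nat_eq)
  finally show ?thesis using of_real_eq_iff by blast
qed


lemma detector:
  fixes f :: "int \<Rightarrow> real"
  assumes N: "N > 0" and per: "\<forall>m. f (m + int N) = f m"
  shows "(1 / real N) * (\<Sum>g<N. (f (int g + h) - f (int g) - t * (f (int g + b) - f (int g)))\<^sup>2) =
    (\<Sum>j<N. (cmod ((ee (- (of_int h * (real j / real N))) - 1) - of_real t * (ee (- (of_int b * (real j / real N))) - 1)))\<^sup>2
        * (cmod (FT N (\<lambda>n. of_real (f n)) (real j / real N)))\<^sup>2)"
proof -
  define F where "F n = complex_of_real (f n)" for n
  have perF: "\<forall>m. F (m + int N) = F m" using per unfolding F_def by simp
  define D where "D n = (F (n + h) - F n) - of_real t * (F (n + b) - F n)" for n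
  have kj: "real N * (real j / real N) \<in> \<int>" for j using N by simp
  have FD: "FT N D (real j / real N) = ((ee (- (of_int h * (real j / real N))) - 1) - of_real t * (ee (- (of_int b * (real j / real N))) - 1))
      * FT N F (real j / real N)" for j
  proof -
    have "FT N D (real j / real N) = (FT N (\<lambda>n. F (n + h)) (real j / real N) - FT N F (real j / real N))
       - of_real t * (FT N (\<lambda>n. F (n + b)) (real j / real N) - FT N F (real j / real N))"
      unfolding D_def by (simp only: FT_diff FT_scale)
    also have "\<dots> = ((ee (- (of_int h * (real j / real N))) - 1) - of_real t * (ee (- (of_int b * (real j / real N))) - 1))
      * FT N F (real j / real N)"
      unfolding FT_shift[OF N perF kj] by (simp add: algebra_simps)
    finally show ?thesis .
  qed
  have "(\<Sum>j<N. (cmod (FT N D (real j / real N)))\<^sup>2) = (1 / real N) * (\<Sum>n<N. (cmod (D (int n)))\<^sup>2)"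
    by (rule parseval[OF N])
  moreover have "cmod (D (int g)) ^ 2 = (f (int g + h) - f (int g) - t * (f (int g + b) - f (int g)))\<^sup>2" for g
  proof -
    have "D (int g) = complex_of_real (f (int g + h) - f (int g) - t * (f (int g + b) - f (int g)))"
      unfolding D_def F_def by simp
    then show ?thesis by (simp only: norm_of_real power2_abs)
  qed
  ultimately show ?thesis unfolding FD F_def by (simp add: norm_mult power_mult_distrib)
qed

definition dd :: "real \<Rightarrow> real" where "dd x = cmod (1 - ee x)"

lemma dd_nonneg[simp]: "dd x \<ge> 0" unfolding dd_def by simp

lemma dd_zero[simp]: "dd 0 = 0" unfolding dd_def by simp

lemma dd_add: "dd (x + y) \<le> dd x + dd y"
proof -
  have "1 - ee (x + y) = (1 - ee x) + ee x * (1 - ee y)" by (simp add: ee_add algebra_simps)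
  then have "cmod (1 - ee (x + y)) \<le> cmod (1 - ee x) + cmod (ee x * (1 - ee y))"
    by (metis norm_triangle_ineq)
  then show ?thesis unfolding dd_def by (simp add: norm_mult)
qed

lemma dd_neg: "dd (- x) = dd x"
proof -
  have "cnj (1 - ee x) = 1 - ee (- x)" by (simp add: cnj_ee)
  then show ?thesis unfolding dd_def by (metis complex_mod_cnj)
qed

lemma dd_le2: "dd x \<le> 2"
proof -
  have "cmod (1 - ee x) \<le> cmod 1 + cmod (ee x)" by (rule norm_triangle_ineq4)
  then show ?thesis unfolding dd_def by simp
qed

lemma dd_mult_nat: "dd (real n * x) \<le> real n * dd x"
proof (induction n)
  case 0 then show ?case by simp
next
  case (Suc n)
  have "dd (real (Suc n) * x) = dd (real n * x + x)" by (simp add: algebra_simps)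
  also have "\<dots> \<le> dd (real n * x) + dd x" by (rule dd_add)
  also have "\<dots> \<le> real n * dd x + dd x" using Suc by simp
  finally show ?case by (simp add: algebra_simps)
qed

lemma dd_mult_int: "dd (of_int n * x) \<le> \<bar>of_int n\<bar> * dd x"
proof (cases "n \<ge> 0")
  case True
  then have "of_int n = real (nat n)" by simp
  then show ?thesis using dd_mult_nat[of "nat n" x] True by simp
next
  case False
  then have e: "of_int n * x = - (real (nat (- n)) * x)" by simp
  have "\<bar>(of_int n :: real)\<bar> = real (nat (- n))" using False by simp
  then show ?thesis unfolding e dd_neg using dd_mult_nat[of "nat (-n)" x] by simp
qed

lemma dd_sum: "finite F \<Longrightarrow> dd (\<Sum>h\<in>F. x h) \<le> (\<Sum>h\<in>F. dd (x h))"
proof (induction F rule: finite_induct)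
  case empty then show ?case by simp
next
  case (insert a F)
  then show ?case using dd_add[of "x a" "sum x F"] by simp
qed

lemma dd_period: "dd (x + of_int n) = dd x"
  unfolding dd_def by (simp add: ee_add)

lemma dd_sq: "(dd x)\<^sup>2 = 4 * (sin (pi * x))\<^sup>2"
proof -
  have "ee x = Complex (cos (2 * pi * x)) (sin (2 * pi * x))" unfolding ee_def by (simp add: cis.ctr)
  then have "(dd x)\<^sup>2 = (1 - cos (2 * pi * x))\<^sup>2 + (sin (2 * pi * x))\<^sup>2"
    unfolding dd_def by (simp add: cmod_def)
  also have "\<dots> = 2 - 2 * cos (2 * (pi * x))" by (simp add: power2_eq_square algebra_simps)
  also have "\<dots> = 4 * (sin (pi * x))\<^sup>2" by (simp add: cos_double_sin)
  finally show ?thesis .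
qed

lemma sin_lower: fixes y :: real assumes "0 \<le> y" "y \<le> 2" shows "y / 3 \<le> sin y"
proof -
  have "\<bar>sin y - (\<Sum>m<3. sin_coeff m * y ^ m)\<bar> \<le> inverse (fact 3) * \<bar>y\<bar> ^ 3"
    by (rule Maclaurin_sin_bound)
  moreover have "(\<Sum>m<3. sin_coeff m * y ^ m) = y"
    by (simp add: sin_coeff_def eval_nat_numeral)
  moreover have "(fact 3 :: real) = 6" by (simp add: eval_nat_numeral)
  ultimately have "y - y ^ 3 / 6 \<le> sin y" using assms by (simp add: divide_simps) (smt (verit))
  moreover have "y ^ 3 / 6 \<le> 2 * y / 3"
  proof -
    have "y ^ 3 = y * y\<^sup>2" by (simp add: power2_eq_square power3_eq_cube)
    also have "\<dots> \<le> y * 4"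
    proof (rule mult_left_mono)
      have "y * y \<le> 2 * 2" using assms by (intro mult_mono) auto
      then show "y\<^sup>2 \<le> 4" by (simp add: power2_eq_square)
    qed (use assms in auto)
    finally show ?thesis by simp
  qed
  ultimately show ?thesis by simp
qed

lemma absk_eq: fixes k :: real assumes "0 \<le> k" "k < 1" shows "absk k = min k (1 - k)"
proof -
  have ne: "(\<int>::real set) \<noteq> {}" by blast
  have le: "absk k \<le> min k (1 - k)"
  proof -
    have "absk k \<le> dist k 0" unfolding absk_def by (rule infdist_le) simp
    moreover have "absk k \<le> dist k 1" unfolding absk_def by (rule infdist_le) simp
    ultimately show ?thesis using assms by (simp add: dist_real_def)
  qed
  have ge: "min k (1 - k) \<le> absk k"
    unfolding absk_def infdist_notempty[OF ne]
  proof (rule cINF_greatest[OF ne])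
    fix a :: real assume "a \<in> \<int>"
    then obtain z where z: "a = of_int z" by (metis Ints_cases)
    show "min k (1 - k) \<le> dist k a"
    proof (cases "z \<le> 0")
      case True then have "a \<le> 0" using z by simp
      then show ?thesis using assms by (simp add: dist_real_def)
    next
      case False then have "a \<ge> 1" using z by simp
      then show ?thesis using assms by (simp add: dist_real_def)
    qed
  qed
  show ?thesis by (rule antisym[OF le ge])
qed

lemma dd_absk:
  assumes "0 \<le> k" "k < 1"
  shows "(absk k)\<^sup>2 \<le> (dd k)\<^sup>2" and "(dd k)\<^sup>2 \<le> 4 * pi\<^sup>2 * (absk k)\<^sup>2"
proof -
  define a where "a = absk k"
  have a: "a = min k (1 - k)" unfolding a_def using absk_eq[OF assms] .
  have dda: "dd k = dd a"
  proof (cases "k \<le> 1 - k")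
    case True then show ?thesis using a by simp
  next
    case False
    then have "a = - (k + of_int (-1))" using a by simp
    then show ?thesis using dd_neg dd_period by metis
  qed
  have a0: "0 \<le> a" "a \<le> 1/2" using a assms by (auto simp: min_def)
  have "pi * a \<le> 4 * (1/2)" using a0 pi_less_4 by (intro mult_mono) auto
  then have "pi * a \<le> 2" by simp
  then have "pi * a / 3 \<le> sin (pi * a)" using sin_lower a0 by simp
  moreover have "2 * a / 3 \<le> pi * a / 3" using pi_ge_two a0 by (simp add: mult_right_mono)
  ultimately have "2 * a / 3 \<le> sin (pi * a)" by simp
  then have "(2 * a / 3)\<^sup>2 \<le> (sin (pi * a))\<^sup>2" using a0 by (intro power_mono) auto
  then have "4 * (a * a) \<le> 9 * (sin (pi * a) * sin (pi * a))" by (simp add: power2_eq_square)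
  moreover have "0 \<le> a * a" by simp
  ultimately have "a * a \<le> 4 * (sin (pi * a) * sin (pi * a))" by linarith
  then show "(absk k)\<^sup>2 \<le> (dd k)\<^sup>2" unfolding dda dd_sq a_def[symmetric] by (simp add: power2_eq_square)
  have "\<bar>sin (pi * a)\<bar> \<le> \<bar>pi * a\<bar>" by (rule abs_sin_x_le_abs_x)
  then have "(sin (pi * a))\<^sup>2 \<le> (pi * a)\<^sup>2" by (metis abs_le_square_iff)
  then show "(dd k)\<^sup>2 \<le> 4 * pi\<^sup>2 * (absk k)\<^sup>2" unfolding dda dd_sq a_def[symmetric] by (simp add: power_mult_distrib)
qed

lemma norm_ee_minus_1: "cmod (ee (- x) - 1) = dd x"
proof -
  have "cmod (ee (- x) - 1) = cmod (1 - ee (- x))" by (rule norm_minus_commute)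
  then show ?thesis using dd_neg unfolding dd_def by metis
qed

lemma dd_sq_int: "(dd (of_int h * k))\<^sup>2 \<le> (of_int h)\<^sup>2 * (dd k)\<^sup>2"
proof -
  have "dd (of_int h * k) \<le> \<bar>of_int h\<bar> * dd k" by (rule dd_mult_int)
  then have "(dd (of_int h * k))\<^sup>2 \<le> (\<bar>of_int h\<bar> * dd k)\<^sup>2" by (intro power_mono) auto
  then show ?thesis by (simp add: power_mult_distrib)
qed

lemma mult2_upper:
  assumes "0 \<le> k" "k < 1"
  shows "(\<Sum>h\<in>R. (dd (of_int h * k))\<^sup>2) \<le> (\<Sum>h\<in>R. (of_int h)\<^sup>2) * (4 * pi\<^sup>2) * (absk k)\<^sup>2"
proof -
  have "(\<Sum>h\<in>R. (dd (of_int h * k))\<^sup>2) \<le> (\<Sum>h\<in>R. (of_int h)\<^sup>2 * (4 * pi\<^sup>2 * (absk k)\<^sup>2))"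
  proof (rule sum_mono)
    fix h
    have "(dd (of_int h * k))\<^sup>2 \<le> (of_int h)\<^sup>2 * (dd k)\<^sup>2" by (rule dd_sq_int)
    also have "\<dots> \<le> (of_int h)\<^sup>2 * (4 * pi\<^sup>2 * (absk k)\<^sup>2)"
      using dd_absk(2)[OF assms] by (intro mult_left_mono) auto
    finally show "(dd (of_int h * k))\<^sup>2 \<le> (of_int h)\<^sup>2 * (4 * pi\<^sup>2 * (absk k)\<^sup>2)" .
  qed
  then show ?thesis by (simp add: sum_distrib_right mult.assoc)
qed

lemma bezout_dd:
  assumes fin: "finite R'" and bez: "(\<Sum>h\<in>R'. c h * h) = (1::int)"
  shows "(dd k)\<^sup>2 \<le> (\<Sum>h\<in>R'. (of_int (c h))\<^sup>2) * (\<Sum>h\<in>R'. (dd (of_int h * k))\<^sup>2)"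
proof -
  have "k = (\<Sum>h\<in>R'. of_int (c h) * (of_int h * k))"
  proof -
    have "(\<Sum>h\<in>R'. of_int (c h) * (of_int h * k)) = (\<Sum>h\<in>R'. of_int (c h * h)) * k"
      by (simp add: sum_distrib_right mult.assoc)
    also have "\<dots> = of_int (\<Sum>h\<in>R'. c h * h) * k" by simp
    finally show ?thesis using bez by simp
  qed
  then have "dd k = dd (\<Sum>h\<in>R'. of_int (c h) * (of_int h * k))" by simp
  also have "\<dots> \<le> (\<Sum>h\<in>R'. dd (of_int (c h) * (of_int h * k)))" by (rule dd_sum[OF fin])
  also have "\<dots> \<le> (\<Sum>h\<in>R'. \<bar>of_int (c h)\<bar> * dd (of_int h * k))"
    by (intro sum_mono dd_mult_int)
  finally have 1: "dd k \<le> (\<Sum>h\<in>R'. \<bar>of_int (c h)\<bar> * dd (of_int h * k))" .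
  have "(dd k)\<^sup>2 \<le> (\<Sum>h\<in>R'. \<bar>of_int (c h)\<bar> * dd (of_int h * k))\<^sup>2"
    using 1 by (intro power_mono) auto
  also have "\<dots> \<le> (\<Sum>h\<in>R'. \<bar>of_int (c h) :: real\<bar>\<^sup>2) * (\<Sum>h\<in>R'. (dd (of_int h * k))\<^sup>2)"
    by (rule Cauchy_Schwarz_ineq_sum)
  finally show ?thesis by simp
qed

lemma mult2_lower:
  assumes fin: "finite R" and sub: "R' \<subseteq> R" and bez: "(\<Sum>h\<in>R'. c h * h) = (1::int)"
    and k: "0 \<le> k" "k < 1"
  shows "(absk k)\<^sup>2 \<le> ((\<Sum>h\<in>R'. (of_int (c h))\<^sup>2) + 1) * (\<Sum>h\<in>R. (dd (of_int h * k))\<^sup>2)"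
proof -
  have finR': "finite R'" using fin sub finite_subset by blast
  let ?K = "(\<Sum>h\<in>R'. (of_int (c h) :: real)\<^sup>2)"
  have K0: "?K \<ge> 0" by (simp add: sum_nonneg)
  have "(absk k)\<^sup>2 \<le> (dd k)\<^sup>2" by (rule dd_absk(1)[OF k])
  also have "\<dots> \<le> ?K * (\<Sum>h\<in>R'. (dd (of_int h * k))\<^sup>2)" by (rule bezout_dd[OF finR' bez])
  also have "\<dots> \<le> (?K + 1) * (\<Sum>h\<in>R. (dd (of_int h * k))\<^sup>2)"
    using K0 by (intro mult_mono sum_mono2 fin sub) (auto simp: sum_nonneg)
  finally show ?thesis .
qed

lemma P_bound:
  fixes h :: int
  shows "cmod ((ee (- (of_int h * k)) - 1) - complex_of_real (of_int h) * (ee (- k) - 1)) \<le> (of_int h)\<^sup>2 * (dd k)\<^sup>2"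
proof -
  define P where "P h = (ee (- (of_int h * k)) - 1) - complex_of_real (of_int h) * (ee (- k) - 1)" for h :: int
  have diff: "P (h + 1) - P h = (ee (- (of_int h * k)) - 1) * (ee (- k) - 1)" for h
  proof -
    have "ee (- (of_int (h + 1) * k)) = ee (- (of_int h * k)) * ee (- k)"
    proof -
      have "- (of_int (h + 1) * k) = - (of_int h * k) + - k" by (simp add: algebra_simps)
      then show ?thesis by (metis ee_add)
    qed
    then show ?thesis unfolding P_def by (simp add: algebra_simps)
  qed
  have nd: "cmod ((ee (- (of_int h * k)) - 1) * (ee (- k) - 1)) \<le> \<bar>of_int h\<bar> * (dd k)\<^sup>2" for h
  proof -
    have "cmod ((ee (- (of_int h * k)) - 1) * (ee (- k) - 1)) = dd (of_int h * k) * dd k"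
      by (simp add: norm_mult norm_ee_minus_1 del: ee_int)
    also have "\<dots> \<le> (\<bar>of_int h\<bar> * dd k) * dd k" by (intro mult_right_mono dd_mult_int) auto
    finally show ?thesis by (simp add: power2_eq_square mult.assoc)
  qed
  have "cmod (P h) \<le> (of_int h)\<^sup>2 * (dd k)\<^sup>2"
  proof (induction h rule: int_induct[where k = 0])
    case base then show ?case unfolding P_def by simp
  next
    case (step1 i)
    have "P (i + 1) = P i + (ee (- (of_int i * k)) - 1) * (ee (- k) - 1)" using diff[of i] by (simp add: algebra_simps)
    then have "cmod (P (i + 1)) \<le> cmod (P i) + cmod ((ee (- (of_int i * k)) - 1) * (ee (- k) - 1))"
      by (metis norm_triangle_ineq)
    also have "\<dots> \<le> (of_int i)\<^sup>2 * (dd k)\<^sup>2 + \<bar>of_int i\<bar> * (dd k)\<^sup>2" using step1 nd[of i] by simp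
    also have "\<dots> \<le> (of_int (i + 1))\<^sup>2 * (dd k)\<^sup>2"
    proof -
      have "(of_int i)\<^sup>2 + \<bar>of_int i\<bar> \<le> (of_int (i + 1) :: real)\<^sup>2" using step1 by (simp add: power2_eq_square algebra_simps)
      then show ?thesis by (metis distrib_right mult_right_mono zero_le_power2)
    qed
    finally show ?case .
  next
    case (step2 i)
    have "P (i - 1) = P i - (ee (- (of_int (i - 1) * k)) - 1) * (ee (- k) - 1)" using diff[of "i - 1"] by (simp add: algebra_simps)
    then have "cmod (P (i - 1)) \<le> cmod (P i) + cmod ((ee (- (of_int (i - 1) * k)) - 1) * (ee (- k) - 1))"
      by (metis norm_triangle_ineq4)
    also have "\<dots> \<le> (of_int i)\<^sup>2 * (dd k)\<^sup>2 + \<bar>of_int (i - 1)\<bar> * (dd k)\<^sup>2" using step2 nd[of "i - 1"] by simp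
    also have "\<dots> \<le> (of_int (i - 1))\<^sup>2 * (dd k)\<^sup>2"
    proof -
      have "(of_int i)\<^sup>2 + \<bar>of_int (i - 1)\<bar> \<le> (of_int (i - 1) :: real)\<^sup>2" using step2 by (simp add: power2_eq_square algebra_simps)
      then show ?thesis by (metis distrib_right mult_right_mono zero_le_power2)
    qed
    finally show ?case .
  qed
  then show ?thesis unfolding P_def .
qed


lemma sq_sum_le: "(a + b :: real)\<^sup>2 \<le> 2 * a\<^sup>2 + 2 * b\<^sup>2"
proof -
  have "0 \<le> (a - b)\<^sup>2" by simp
  then show ?thesis by (simp add: power2_eq_square algebra_simps)
qed

lemma norm_sq_le: "cmod x \<le> a + b \<Longrightarrow> 0 \<le> cmod x \<Longrightarrow> (cmod x)\<^sup>2 \<le> 2 * a\<^sup>2 + 2 * b\<^sup>2"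
  by (meson order_trans power_mono sq_sum_le)

lemma mult3_lower:
  fixes b :: int
  assumes fin: "finite R" and sub: "R' \<subseteq> R" and shift: "\<forall>h\<in>R'. h + b \<in> R" and b: "b \<noteq> 0"
    and bez: "(\<Sum>h\<in>R'. c h * h) = (1::int)" and k: "0 \<le> k" "k < 1"
  shows "(absk k)^4 \<le> (((\<Sum>h\<in>R'. (of_int (c h))\<^sup>2) + 1)\<^sup>2 * (8 * real (card R') + 8 * (\<Sum>h\<in>R'. (of_int h / of_int b)\<^sup>2)) + 1)
     * (\<Sum>h\<in>R. (cmod ((ee (- (of_int h * k)) - 1) - complex_of_real (of_int h / of_int b) * (ee (- (of_int b * k)) - 1)))\<^sup>2)"
proof -
  have finR': "finite R'" using fin sub finite_subset by blast
  define E where "E x = ee (- (of_int x * k))" for x :: int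
  define M where "M h = (cmod ((E h - 1) - complex_of_real (of_int h / of_int b) * (E b - 1)))\<^sup>2" for h
  define S where "S = (\<Sum>h\<in>R. M h)"
  define K where "K = (\<Sum>h\<in>R'. (of_int (c h) :: real)\<^sup>2)"
  define B where "B = (\<Sum>h\<in>R'. (of_int h / of_int b :: real)\<^sup>2)"
  define X where "X = (dd k)\<^sup>2"
  define Y where "Y = (dd (of_int b * k))\<^sup>2"
  define T where "T = (\<Sum>h\<in>R'. (dd (of_int h * k))\<^sup>2)"
  have M0: "M h \<ge> 0" for h unfolding M_def by simp
  have S0: "S \<ge> 0" unfolding S_def using M0 by (simp add: sum_nonneg)
  have K0: "K \<ge> 0" unfolding K_def by (simp add: sum_nonneg)
  have B0: "B \<ge> 0" unfolding B_def by (simp add: sum_nonneg)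
  have T0: "T \<ge> 0" unfolding T_def by (simp add: sum_nonneg)
  have Y0: "Y \<ge> 0" unfolding Y_def by simp
  have X0: "X \<ge> 0" unfolding X_def by simp
  have nE: "cmod (E h - 1) = dd (of_int h * k)" for h unfolding E_def by (rule norm_ee_minus_1)
  have a: "X \<le> (K + 1) * T"
  proof -
    have "X \<le> K * T" unfolding X_def K_def T_def by (rule bezout_dd[OF finR' bez])
    also have "\<dots> \<le> (K + 1) * T" using T0 by (simp add: distrib_right)
    finally show ?thesis .
  qed
  have SR': "(\<Sum>h\<in>R'. M h) \<le> S" unfolding S_def using M0 by (intro sum_mono2 fin sub) auto
  have SR'b: "(\<Sum>h\<in>R'. M (h + b)) \<le> S"
  proof -
    have "(\<Sum>h\<in>R'. M (h + b)) = (\<Sum>x\<in>(\<lambda>h. h + b) ` R'. M x)"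
      by (subst sum.reindex) (auto simp: inj_on_def)
    also have "\<dots> \<le> S" unfolding S_def using M0 shift by (intro sum_mono2 fin) auto
    finally show ?thesis .
  qed
  have bpt: "(dd (of_int h * k))\<^sup>2 \<le> 2 * M h + 2 * ((of_int h / of_int b)\<^sup>2 * Y)" for h
  proof -
    let ?m = "(E h - 1) - complex_of_real (of_int h / of_int b) * (E b - 1)"
    have "E h - 1 = ?m + complex_of_real (of_int h / of_int b) * (E b - 1)" by simp
    then have "cmod (E h - 1) \<le> cmod ?m + cmod (complex_of_real (of_int h / of_int b) * (E b - 1))"
      by (metis norm_triangle_ineq)
    also have "cmod (complex_of_real (of_int h / of_int b) * (E b - 1)) = \<bar>of_int h / of_int b\<bar> * dd (of_int b * k)"
      by (simp only: norm_mult norm_of_real nE)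
    finally have "(cmod (E h - 1))\<^sup>2 \<le> 2 * (cmod ?m)\<^sup>2 + 2 * (\<bar>of_int h / of_int b\<bar> * dd (of_int b * k))\<^sup>2"
      by (intro norm_sq_le) auto
    moreover have "(\<bar>of_int h / of_int b\<bar> * dd (of_int b * k))\<^sup>2 = (of_int h / of_int b)\<^sup>2 * Y"
      unfolding Y_def by (simp only: power_mult_distrib power2_abs)
    ultimately show ?thesis unfolding nE M_def by simp
  qed
  have b1: "T \<le> 2 * S + 2 * B * Y"
  proof -
    have "T \<le> (\<Sum>h\<in>R'. 2 * M h + 2 * ((of_int h / of_int b)\<^sup>2 * Y))" unfolding T_def by (intro sum_mono bpt)
    also have "\<dots> = 2 * (\<Sum>h\<in>R'. M h) + 2 * B * Y" unfolding B_def
      by (simp add: sum.distrib sum_distrib_left sum_distrib_right mult.assoc)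
    also have "\<dots> \<le> 2 * S + 2 * B * Y" using SR' by simp
    finally show ?thesis .
  qed
  have cpt: "(dd (of_int h * k))\<^sup>2 * Y \<le> 2 * M (h + b) + 2 * M h" for h
  proof -
    let ?m = "\<lambda>h. (E h - 1) - complex_of_real (of_int h / of_int b) * (E b - 1)"
    have Ehb: "E (h + b) = E h * E b"
    proof -
      have "- (of_int (h + b) * k) = - (of_int h * k) + - (of_int b * k)" by (simp add: algebra_simps)
      then show ?thesis unfolding E_def by (metis ee_add)
    qed
    have t: "of_int (h + b) / of_int b = of_int h / of_int b + (1::real)" using b by (simp add: field_simps)
    have "?m (h + b) - ?m h = (E h - 1) * (E b - 1)"
      unfolding Ehb t by (simp add: algebra_simps)
    then have "(E h - 1) * (E b - 1) = ?m (h + b) + (- ?m h)" by simp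
    then have "cmod ((E h - 1) * (E b - 1)) \<le> cmod (?m (h + b)) + cmod (?m h)"
      by (metis norm_minus_cancel norm_triangle_ineq)
    then have "(cmod ((E h - 1) * (E b - 1)))\<^sup>2 \<le> 2 * (cmod (?m (h + b)))\<^sup>2 + 2 * (cmod (?m h))\<^sup>2"
      by (intro norm_sq_le) auto
    then show ?thesis unfolding M_def Y_def by (simp add: norm_mult nE power_mult_distrib)
  qed
  have c1: "Y * T \<le> 4 * S"
  proof -
    have "Y * T = (\<Sum>h\<in>R'. (dd (of_int h * k))\<^sup>2 * Y)" unfolding T_def by (simp add: sum_distrib_left mult.commute)
    also have "\<dots> \<le> (\<Sum>h\<in>R'. 2 * M (h + b) + 2 * M h)" by (intro sum_mono cpt)
    also have "\<dots> = 2 * (\<Sum>h\<in>R'. M (h + b)) + 2 * (\<Sum>h\<in>R'. M h)" by (simp add: sum.distrib sum_distrib_left)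
    also have "\<dots> \<le> 4 * S" using SR' SR'b by simp
    finally show ?thesis .
  qed
  have d: "T \<le> 4 * real (card R')"
  proof -
    have "T \<le> (\<Sum>h\<in>R'. 4)" unfolding T_def
    proof (intro sum_mono)
      fix h
      have "(dd (of_int h * k))\<^sup>2 \<le> 2\<^sup>2" using dd_le2 by (intro power_mono) auto
      then show "(dd (of_int h * k))\<^sup>2 \<le> 4" by simp
    qed
    then show ?thesis by simp
  qed
  have "(absk k)^4 = ((absk k)\<^sup>2)\<^sup>2" by simp
  also have "\<dots> \<le> X\<^sup>2" unfolding X_def using dd_absk(1)[OF k] by (rule power_mono) auto
  also have "\<dots> \<le> ((K + 1) * T)\<^sup>2" using a X0 by (intro power_mono) auto
  also have "\<dots> = (K + 1)\<^sup>2 * (T * T)" by (simp add: power2_eq_square)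
  also have "\<dots> \<le> (K + 1)\<^sup>2 * ((8 * real (card R') + 8 * B) * S)"
  proof (rule mult_left_mono)
    have "T * T \<le> T * (2 * S + 2 * B * Y)" using b1 T0 by (intro mult_left_mono) auto
    also have "\<dots> = 2 * (T * S) + 2 * B * (Y * T)" by (simp add: algebra_simps)
    also have "\<dots> \<le> 2 * (4 * real (card R') * S) + 2 * B * (4 * S)"
      using d c1 S0 B0 by (intro add_mono mult_left_mono mult_right_mono) auto
    also have "\<dots> = (8 * real (card R') + 8 * B) * S" by (simp add: algebra_simps)
    finally show "T * T \<le> (8 * real (card R') + 8 * B) * S" .
  qed simp
  also have "\<dots> \<le> ((K + 1)\<^sup>2 * (8 * real (card R') + 8 * B) + 1) * S"
    using S0 by (simp add: algebra_simps)
  finally show ?thesis unfolding S_def M_def E_def K_def B_def .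
qed

lemma rot_tpow[simp]: "rot (tpow h) = mat 1"
  unfolding rot_def tpow_def by simp

lemma act_tpow: "act (tpow h) x0 - x0 = of_int h *\<^sub>R e2"
  unfolding act_def tpow_def x0_def by simp

lemma transpose_mat1_mul[simp]: "transpose (mat 1 :: real^2^2) *v x = x"
  by (simp add: transpose_mat)

lemma norm2_sq: "(norm (x :: real^2))\<^sup>2 = (x$1)\<^sup>2 + (x$2)\<^sup>2"
  unfolding power2_norm_eq_inner by (simp add: inner_vec_def sum_2 power2_eq_square)

lemma norm2c_sq: "(norm (x :: complex^2))\<^sup>2 = (cmod (x$1))\<^sup>2 + (cmod (x$2))\<^sup>2"
  by (simp add: norm_vec_def L2_set_def sum_2)

lemma Uper_per:
  assumes "u \<in> Uper"
  shows "per u > 0" "\<forall>n. u (n + int (per u)) = u n"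
proof -
  have ex: "\<exists>N::nat. N > 0 \<and> (\<forall>n. u (n + int N) = u n)" using assms unfolding Uper_def by blast
  have "per u > 0 \<and> (\<forall>n. u (n + int (per u)) = u n)"
    unfolding per_def by (rule LeastI_ex[OF ex])
  then show "per u > 0" "\<forall>n. u (n + int (per u)) = u n" by auto
qed

lemma per_dvd:
  assumes u: "u \<in> Uper" and M: "M > 0" "\<forall>n. u (n + int M) = u n"
  shows "per u dvd M"
proof (rule ccontr)
  assume nd: "\<not> per u dvd M"
  define N where "N = per u"
  have N: "N > 0" "\<forall>n. u (n + int N) = u n" using Uper_per[OF u] unfolding N_def by auto
  have r0: "M mod N > 0" using nd unfolding N_def by (simp add: dvd_eq_mod_eq_0)
  have "\<forall>n. u (n + int (M mod N)) = u n"
  proof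
    fix n
    have "int M = int (M mod N) + int N * int (M div N)"
      by (metis of_nat_add of_nat_mult mod_div_mult_eq mult.commute)
    then have "u (n + int M) = u ((n + int (M mod N)) + int N * int (M div N))" by (simp add: algebra_simps)
    also have "\<dots> = u (n + int (M mod N))" by (rule periodic_mult[OF N(2)])
    finally show "u (n + int (M mod N)) = u n" using M(2) by simp
  qed
  then have P: "M mod N > 0 \<and> (\<forall>n. u (n + int (M mod N)) = u n)" using r0 by blast
  have "per u \<le> M mod N" unfolding per_def by (rule Least_le) (rule P)
  then have "N \<le> M mod N" unfolding N_def .
  moreover have "M mod N < N" using N by simp
  ultimately show False by simp
qed

lemma exp_ee: "exp (2 * pi * \<i> * of_nat n * of_real k) = ee (real n * k)"
proof -
  have "2 * pi * \<i> * of_nat n * of_real k = \<i> * complex_of_real (2 * pi * (real n * k))"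
    by (simp add: algebra_simps)
  then show ?thesis unfolding ee_def cis_conv_exp by (metis mult.assoc)
qed

lemma sum_group:
  fixes g :: "nat \<Rightarrow> complex"
  shows "(\<Sum>n<m * N. g n) = (\<Sum>q<m. \<Sum>r<N. g (q * N + r))"
proof (induction m)
  case 0 then show ?case by simp
next
  case (Suc m)
  have "{..<Suc m * N} = {..<m * N} \<union> {m * N..<m * N + N}" by auto
  then have "(\<Sum>n<Suc m * N. g n) = (\<Sum>n<m * N. g n) + (\<Sum>n\<in>{m * N..<m * N + N}. g n)"
    by (simp add: sum.union_disjoint ivl_disj_int)
  also have "(\<Sum>n\<in>{m * N..<m * N + N}. g n) = (\<Sum>r<N. g (m * N + r))"
    by (simp add: sum.shift_bounds_nat_ivl[of g 0 "m * N" N, simplified] atLeast0LessThan add.commute)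
  finally show ?case using Suc by simp
qed

lemma uhat_comp:
  assumes u: "u \<in> Uper" and k: "k \<in> Qk"
  shows "uhat u k $ i = (if real (per u) * k \<in> \<int> then FT (per u) (\<lambda>n. of_real (u n $ i)) k else 0)"
proof -
  define N where "N = per u"
  have N: "N > 0" "\<forall>n. u (n + int N) = u n" using Uper_per[OF u] unfolding N_def by auto
  define P where "P M = (M > 0 \<and> real M * k \<in> \<int> \<and> (\<forall>n. u (n + int M) = u n))" for M :: nat
  have kQ: "k \<in> \<rat>" using k unfolding Qk_def by simp
  obtain a q where aq: "q > 0" "k = of_int a / of_int q" using Rats_cases'[OF kQ] by metis
  have "P (N * nat q)"
    unfolding P_def
  proof (intro conjI allI)
    show "N * nat q > 0" using N aq by simp
    have q': "real (nat q) = real_of_int q" using aq(1) by simp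
    have "real (nat q) * k = of_int a" using aq q' by (simp add: field_simps)
    then have eq: "real (N * nat q) * k = real N * of_int a" by (metis of_nat_mult mult.assoc)
    have "real N * of_int a \<in> \<int>" by (intro Ints_mult) auto
    then show "real (N * nat q) * k \<in> \<int>" unfolding eq .
    fix n
    have "u (n + int N * int (nat q)) = u n" by (rule periodic_mult[OF N(2)])
    then show "u (n + int (N * nat q)) = u n" by simp
  qed
  then have ex: "\<exists>M. P M" by blast
  define M where "M = (LEAST M. P M)"
  have PM: "P M" unfolding M_def by (rule LeastI_ex[OF ex])
  have uh: "uhat u k $ i = (1 / of_nat M) * (\<Sum>n<M. ee (real n * k) * of_real (u (int n) $ i))"
  proof -
    have "uhat u k $ i = (1 / of_nat M) * (\<Sum>n<M. exp (2 * pi * \<i> * of_nat n * of_real k) * of_real (u (int n) $ i))"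
      unfolding uhat_def M_def P_def Let_def by simp
    then show ?thesis unfolding exp_ee .
  qed
  have "N dvd M" unfolding N_def using per_dvd[OF u] PM unfolding P_def by blast
  then obtain m where m: "M = m * N" by (metis dvd_def mult.commute)
  have m0: "m > 0" using PM m unfolding P_def by simp
  define g where "g n = ee (real n * k) * of_real (u (int n) $ i)" for n
  define \<omega> where "\<omega> = ee (real N * k)"
  have gq: "g (q * N + r) = \<omega> ^ q * g r" for q r
  proof -
    have "u (int (q * N + r)) = u (int r + int N * int q)" by (simp add: algebra_simps)
    also have "\<dots> = u (int r)" by (rule periodic_mult[OF N(2)])
    finally have 1: "u (int (q * N + r)) = u (int r)" .
    have "real (q * N + r) * k = real q * (real N * k) + real r * k" by (simp add: algebra_simps)
    then have "ee (real (q * N + r) * k) = \<omega> ^ q * ee (real r * k)" unfolding \<omega>_def ee_pow by (metis ee_add)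
    then show ?thesis unfolding g_def 1 by simp
  qed
  have sumM: "(\<Sum>n<M. g n) = (\<Sum>q<m. \<omega> ^ q) * (\<Sum>r<N. g r)"
    unfolding m sum_group gq sum_product by (rule refl)
  have wm: "\<omega> ^ m = 1"
  proof -
    have "\<omega> ^ m = ee (real M * k)" unfolding \<omega>_def ee_pow m by (simp add: algebra_simps)
    then show ?thesis using PM unfolding P_def by simp
  qed
  have uh2: "uhat u k $ i = (1 / of_nat M) * (\<Sum>n<M. g n)" unfolding g_def by (rule uh)
  show ?thesis
  proof (cases "real N * k \<in> \<int>")
    case True
    then have w1: "\<omega> = 1" unfolding \<omega>_def by simp
    have "(\<Sum>q<m. \<omega> ^ q) = of_nat m" unfolding w1 by simp
    then have "uhat u k $ i = (1 / of_nat M) * (of_nat m * (\<Sum>r<N. g r))" unfolding uh2 sumM by simp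
    also have "\<dots> = (1 / of_nat N) * (\<Sum>r<N. g r)" unfolding m using m0 by (simp add: field_simps)
    also have "\<dots> = FT N (\<lambda>n. of_real (u n $ i)) k" unfolding FT_def g_def by (rule refl)
    finally show ?thesis using True unfolding N_def by simp
  next
    case False
    then have "\<omega> \<noteq> 1" unfolding \<omega>_def ee_eq_1 .
    then have "(\<Sum>q<m. \<omega> ^ q) = 0" using geometric_sum[of \<omega> m] wm by simp
    then have "uhat u k $ i = 0" unfolding uh2 sumM by simp
    then show ?thesis using False unfolding N_def by simp
  qed
qed

lemma uhat_at:
  assumes u: "u \<in> Uper" and j: "j < per u"
  shows "uhat u (real j / real (per u)) $ i = FT (per u) (\<lambda>n. of_real (u n $ i)) (real j / real (per u))"
proof -
  have N: "per u > 0" using Uper_per[OF u] by simp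
  have "real j / real (per u) \<in> Qk" unfolding Qk_def using j N by (auto simp: Rats_divide)
  moreover have "real (per u) * (real j / real (per u)) \<in> \<int>" using N by simp
  ultimately show ?thesis using uhat_comp[OF u] by simp
qed

lemma infsum_reduce:
  fixes \<phi> :: "real \<Rightarrow> real"
  assumes u: "u \<in> Uper" and zero: "\<And>k. k \<in> Qk \<Longrightarrow> uhat u k = 0 \<Longrightarrow> \<phi> k = 0"
  shows "infsum \<phi> Qk = (\<Sum>j<per u. \<phi> (real j / real (per u)))"
proof -
  define N where "N = per u"
  have N: "N > 0" using Uper_per[OF u] unfolding N_def by simp
  define K where "K = (\<lambda>j. real j / real N) ` {..<N}"
  have KQ: "K \<subseteq> Qk" unfolding K_def Qk_def using N by (auto simp: Rats_divide)
  have out: "\<phi> k = 0" if k: "k \<in> Qk - K" for k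
  proof -
    have nz: "real N * k \<notin> \<int>"
    proof
      assume "real N * k \<in> \<int>"
      then obtain z where z: "real N * k = of_int z" by (metis Ints_cases)
      have k01: "0 \<le> k" "k < 1" using k unfolding Qk_def by auto
      have "0 \<le> real N * k" using k01 by simp
      then have z0: "z \<ge> 0" using z by simp
      have "real N * k < real N" using k01 N by simp
      then have zN: "z < int N" using z by linarith
      have "k = real (nat z) / real N" using z z0 N by (simp add: field_simps)
      moreover have "nat z < N" using zN z0 by simp
      ultimately have "k \<in> K" unfolding K_def by blast
      then show False using k by simp
    qed
    have "uhat u k = 0"
      unfolding vec_eq_iff using uhat_comp[OF u] nz k unfolding N_def by simp
    then show ?thesis using zero k by simp
  qed
  have "infsum \<phi> Qk = infsum \<phi> K"
    by (rule infsum_cong_neutral) (use out KQ in auto)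
  also have "\<dots> = sum \<phi> K" unfolding K_def by simp
  also have "\<dots> = (\<Sum>j<N. \<phi> (real j / real N))"
    unfolding K_def using N by (subst sum.reindex) (auto simp: inj_on_def)
  finally show ?thesis unfolding N_def .
qed

lemma distR_le:
  assumes "w \<in> U"
  shows "distR R v U \<le> sqrt (\<Sum>h\<in>R. (norm (v h - w h))\<^sup>2)"
  unfolding distR_def
proof (rule cInf_lower)
  show "sqrt (\<Sum>h\<in>R. (norm (v h - w h))\<^sup>2) \<in> (\<lambda>w. sqrt (\<Sum>h\<in>R. (norm (v h - w h))\<^sup>2)) ` U"
    using assms by blast
  show "bdd_below ((\<lambda>w. sqrt (\<Sum>h\<in>R. (norm (v h - w h))\<^sup>2)) ` U)"
    by (rule bdd_belowI[where m = 0]) (auto simp: sum_nonneg)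
qed

lemma distR_nonneg:
  assumes "U \<noteq> {}"
  shows "0 \<le> distR R v U"
  unfolding distR_def by (rule cInf_greatest) (use assms in \<open>auto simp: sum_nonneg\<close>)

lemma distR_ge:
  assumes U: "U \<noteq> {}" and B: "0 \<le> B" and C: "0 < C"
    and all: "\<And>w. w \<in> U \<Longrightarrow> B \<le> C * (\<Sum>h\<in>R. (norm (v h - w h))\<^sup>2)"
  shows "B \<le> C * (distR R v U)\<^sup>2"
proof -
  have "sqrt (B / C) \<le> distR R v U"
    unfolding distR_def
  proof (rule cInf_greatest)
    show "(\<lambda>w. sqrt (\<Sum>h\<in>R. (norm (v h - w h))\<^sup>2)) ` U \<noteq> {}" using U by simp
    fix x assume "x \<in> (\<lambda>w. sqrt (\<Sum>h\<in>R. (norm (v h - w h))\<^sup>2)) ` U"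
    then obtain w where w: "w \<in> U" "x = sqrt (\<Sum>h\<in>R. (norm (v h - w h))\<^sup>2)" by blast
    have "B / C \<le> (\<Sum>h\<in>R. (norm (v h - w h))\<^sup>2)" using all[OF w(1)] C by (simp add: divide_simps mult.commute)
    then show "sqrt (B / C) \<le> x" using w(2) by simp
  qed
  then have "(sqrt (B / C))\<^sup>2 \<le> (distR R v U)\<^sup>2" using B C by (intro power_mono) auto
  then have "B / C \<le> (distR R v U)\<^sup>2" using B C by simp
  then show ?thesis using C by (simp add: divide_simps mult.commute)
qed

lemma seminormU_sq:
  assumes "U \<noteq> {}"
  shows "(seminormU R U u)\<^sup>2 = (1 / real (per u)) * (\<Sum>g<per u. (distR R (\<lambda>h. u (int g + h)) U)\<^sup>2)"
  unfolding seminormU_def Let_def by (simp add: sum_nonneg)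

lemma gradnorm_sq:
  "(gradnorm R u)\<^sup>2 = (1 / real (per u)) * (\<Sum>g<per u. \<Sum>h\<in>R. (norm (u (int g + h) - u (int g)))\<^sup>2)"
  unfolding gradnorm_def Let_def by (simp add: sum_nonneg)

lemma Uiso00_iff: "w \<in> Uiso00 R \<longleftrightarrow> (\<exists>a. \<forall>h\<in>R. w h = a)"
  unfolding Uiso00_def by simp

lemma Uiso_char:
  assumes "w \<in> Uiso R"
  shows "\<exists>\<alpha> \<beta> \<gamma>. \<forall>h\<in>R. w h $ 1 = \<alpha> + \<beta> * of_int h \<and> w h $ 2 = \<gamma>"
proof -
  obtain a S where S: "S \<in> Skew2" and w: "\<forall>g\<in>R. w g = a + S *v (of_int g *\<^sub>R e2)"
    using assms unfolding Uiso_def act_tpow by auto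
  have "transpose S $ 2 $ 2 = (- S) $ 2 $ 2" using S unfolding Skew2_def by simp
  then have S22: "S $ 2 $ 2 = 0" by (simp add: transpose_def)
  have "\<forall>h\<in>R. w h $ 1 = a $ 1 + S $ 1 $ 2 * of_int h \<and> w h $ 2 = a $ 2"
    using w S22 by (simp add: matrix_vector_mult_def sum_2 e2_def)
  then show ?thesis by blast
qed

lemma Uiso_witness:
  "(\<lambda>h. vector [\<alpha> + \<beta> * of_int h, \<gamma>] :: real^2) \<in> Uiso R"
proof -
  define S :: "real^2^2" where "S = (\<chi> i j. if i = 1 \<and> j = 2 then \<beta> else if i = 2 \<and> j = 1 then - \<beta> else 0)"
  have "S \<in> Skew2" unfolding Skew2_def S_def
    by (simp add: vec_eq_iff forall_2 transpose_def)
  moreover have "\<forall>g\<in>R. rot (tpow g) *v vector [\<alpha> + \<beta> * of_int g, \<gamma>] = vector [\<alpha>, \<gamma>] + S *v (act (tpow g) x0 - x0)"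
    unfolding act_tpow S_def by (simp add: vec_eq_iff forall_2 matrix_vector_mult_def sum_2 e2_def mat_def)
  ultimately show ?thesis unfolding Uiso_def by blast
qed

lemma prop2_data:
  assumes "Property2 R"
  shows "\<exists>R' b c. finite R \<and> 0 \<in> R \<and> R' \<subseteq> R \<and> (\<forall>h\<in>R'. h + b \<in> R) \<and> b \<noteq> 0 \<and> b \<in> R
      \<and> (\<Sum>h\<in>R'. c h * h) = (1::int)"
proof -
  obtain R' R'' where fin: "finite R" and R': "0 \<in> R'" "generates R'" and R'': "finite R''" "0 \<in> R''"
    and aff: "affine hull ((\<lambda>n. act (tpow n) x0) ` R'') = affine hull (range (\<lambda>n. act (tpow n) x0))"
    and sub: "{g + h | g h. g \<in> R' \<and> h \<in> R''} \<subseteq> R"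
    using assms unfolding Property2_def by blast
  have sumR: "g + h \<in> R" if "g \<in> R'" "h \<in> R''" for g h using sub that by blast
  have R'R: "R' \<subseteq> R" using sumR[OF _ R''(2)] by auto
  have finR': "finite R'" using fin R'R finite_subset by blast
  obtain b where b: "b \<in> R''" "b \<noteq> 0"
  proof (rule ccontr)
    assume "\<not> thesis"
    with that have "R'' = {0}" using R''(2) by blast
    then have hs: "affine hull ((\<lambda>n. act (tpow n) x0) ` R'') = {act (tpow 0) x0}"
      by (simp only: image_insert image_empty) (rule hull_same, rule affine_sing)
    have "act (tpow 1) x0 \<in> affine hull (range (\<lambda>n. act (tpow n) x0))" by (rule hull_inc) (rule rangeI)
    then have "act (tpow 1) x0 = act (tpow 0) x0" using aff hs by (metis singletonD)
    then have "e2 = 0" unfolding act_def tpow_def x0_def by simp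
    then have "e2 $ 2 = 0" by simp
    then show False unfolding e2_def by simp
  qed
  define S where "S = {x::int. \<exists>c. x = (\<Sum>h\<in>R'. c h * h)}"
  have H: "0 \<in> S \<and> R' \<subseteq> S \<and> (\<forall>x\<in>S. \<forall>y\<in>S. x + y \<in> S \<and> - x \<in> S) \<longrightarrow> S = UNIV"
    using R'(2) unfolding generates_def by blast
  have "S = UNIV"
  proof -
    have "0 \<in> S" unfolding S_def by (rule CollectI, rule exI[where x = "\<lambda>_. 0"]) simp
    moreover have "R' \<subseteq> S"
    proof
      fix h assume h: "h \<in> R'"
      have "(\<Sum>h'\<in>R'. (if h' = h then 1 else 0) * h') = (\<Sum>h'\<in>R'. (if h' = h then h' else 0))"
        by (rule sum.cong) auto
      also have "\<dots> = h" using h finR' by (simp add: sum.delta)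
      finally have "h = (\<Sum>h'\<in>R'. (if h' = h then 1 else 0) * h')" by simp
      then show "h \<in> S" unfolding S_def by (intro CollectI exI[where x = "\<lambda>h'. if h' = h then 1 else 0"])
    qed
    moreover have "\<forall>x\<in>S. \<forall>y\<in>S. x + y \<in> S \<and> - x \<in> S"
    proof (intro ballI conjI)
      fix x y assume "x \<in> S" "y \<in> S"
      then obtain c1 c2 where c: "x = (\<Sum>h\<in>R'. c1 h * h)" "y = (\<Sum>h\<in>R'. c2 h * h)" unfolding S_def by blast
      have "x + y = (\<Sum>h\<in>R'. (c1 h + c2 h) * h)" unfolding c by (simp add: sum.distrib distrib_right)
      then show "x + y \<in> S" unfolding S_def by (intro CollectI exI[where x = "\<lambda>h. c1 h + c2 h"])
      have "- x = (\<Sum>h\<in>R'. (- c1 h) * h)" unfolding c by (simp add: sum_negf)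
      then show "- x \<in> S" unfolding S_def by (intro CollectI exI[where x = "\<lambda>h. - c1 h"])
    qed
    ultimately show "S = UNIV" using H by blast
  qed
  then have "1 \<in> S" by simp
  then have "\<exists>c. (1::int) = (\<Sum>h\<in>R'. c h * h)" unfolding S_def by (rule CollectD)
  then obtain c where c0: "(1::int) = (\<Sum>h\<in>R'. c h * h)" by (elim exE)
  then have c: "(\<Sum>h\<in>R'. c h * h) = (1::int)" by (rule sym)
  show ?thesis
  proof (intro exI conjI)
    show "finite R" by (rule fin)
    show "0 \<in> R" using sumR[OF R'(1) R''(2)] by simp
    show "R' \<subseteq> R" by (rule R'R)
    show "\<forall>h\<in>R'. h + b \<in> R" using sumR[OF _ b(1)] by blast
    show "b \<noteq> 0" by (rule b(2))
    show "b \<in> R" using sumR[OF R'(1) b(1)] by simp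
    show "(\<Sum>h\<in>R'. c h * h) = (1::int)" by (rule c)
  qed
qed

abbreviation AA :: "(int \<Rightarrow> real^2) \<Rightarrow> 2 \<Rightarrow> nat \<Rightarrow> real" where
  "AA u i j \<equiv> (cmod (FT (per u) (\<lambda>n. of_real (u n $ i)) (real j / real (per u))))\<^sup>2"

abbreviation mult :: "int \<Rightarrow> real \<Rightarrow> int \<Rightarrow> real \<Rightarrow> complex" where
  "mult h t b k \<equiv> (ee (- (of_int h * k)) - 1) - complex_of_real t * (ee (- (of_int b * k)) - 1)"

lemma avg_detect:
  assumes u: "u \<in> Uper"
  shows "(1 / real (per u)) * (\<Sum>g<per u. \<Sum>h\<in>R. (u (int g + h) $ i - u (int g) $ i - t h * (u (int g + b) $ i - u (int g) $ i))\<^sup>2)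
     = (\<Sum>j<per u. (\<Sum>h\<in>R. (cmod (mult h (t h) b (real j / real (per u))))\<^sup>2) * AA u i j)"
proof -
  define N where "N = per u"
  have N: "N > 0" using Uper_per[OF u] unfolding N_def by simp
  have peri: "\<forall>m. u (m + int N) $ i = u m $ i" using Uper_per[OF u] unfolding N_def by simp
  have D: "(1 / real N) * (\<Sum>g<N. (u (int g + h) $ i - u (int g) $ i - t h * (u (int g + b) $ i - u (int g) $ i))\<^sup>2)
     = (\<Sum>j<N. (cmod (mult h (t h) b (real j / real N)))\<^sup>2 * (cmod (FT N (\<lambda>n. of_real (u n $ i)) (real j / real N)))\<^sup>2)" for h
    using detector[of N "\<lambda>n. u n $ i" h "t h" b] N peri by simp
  have "(1 / real N) * (\<Sum>g<N. \<Sum>h\<in>R. (u (int g + h) $ i - u (int g) $ i - t h * (u (int g + b) $ i - u (int g) $ i))\<^sup>2)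
     = (\<Sum>h\<in>R. (1 / real N) * (\<Sum>g<N. (u (int g + h) $ i - u (int g) $ i - t h * (u (int g + b) $ i - u (int g) $ i))\<^sup>2))"
    by (subst sum.swap) (simp add: sum_distrib_left)
  also have "\<dots> = (\<Sum>h\<in>R. \<Sum>j<N. (cmod (mult h (t h) b (real j / real N)))\<^sup>2 * (cmod (FT N (\<lambda>n. of_real (u n $ i)) (real j / real N)))\<^sup>2)"
    by (simp only: D)
  also have "\<dots> = (\<Sum>j<N. \<Sum>h\<in>R. (cmod (mult h (t h) b (real j / real N)))\<^sup>2 * (cmod (FT N (\<lambda>n. of_real (u n $ i)) (real j / real N)))\<^sup>2)"
    by (rule sum.swap)
  also have "\<dots> = (\<Sum>j<N. (\<Sum>h\<in>R. (cmod (mult h (t h) b (real j / real N)))\<^sup>2) * (cmod (FT N (\<lambda>n. of_real (u n $ i)) (real j / real N)))\<^sup>2)"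
    by (simp add: sum_distrib_right)
  finally show ?thesis unfolding N_def .
qed

lemma mult_t0: "cmod (mult h 0 b k) = dd (of_int h * k)"
  by (simp add: norm_ee_minus_1)

lemma sq_le_from_sqrt:
  assumes "0 \<le> d" "d \<le> sqrt Q" shows "d\<^sup>2 \<le> Q"
proof -
  have "0 \<le> sqrt Q" using assms by linarith
  then have Q: "0 \<le> Q" by simp
  have "d\<^sup>2 \<le> (sqrt Q)\<^sup>2" using assms by (intro power_mono) auto
  then show ?thesis using Q by simp
qed

lemma norm_diff_sq_le: "(norm (x - y :: real^2))\<^sup>2 \<le> 2 * (norm (x - a))\<^sup>2 + 2 * (norm (y - a))\<^sup>2"
proof -
  have "x - y = (x - a) - (y - a)" by simp
  then have "norm (x - y) \<le> norm (x - a) + norm (y - a)" by (metis norm_triangle_ineq4)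
  then have "(norm (x - y))\<^sup>2 \<le> (norm (x - a) + norm (y - a))\<^sup>2" by (intro power_mono) auto
  also have "\<dots> \<le> 2 * (norm (x - a))\<^sup>2 + 2 * (norm (y - a))\<^sup>2" by (rule sq_sum_le)
  finally show ?thesis .
qed

lemma part1:
  assumes fin: "finite R" and R0: "0 \<in> R" and u: "u \<in> Uper"
  shows "normR00 R u \<le> gradnorm R u \<and> gradnorm R u \<le> sqrt (2 + 2 * real (card R)) * normR00 R u"
proof -
  define N where "N = per u"
  have N: "N > 0" using Uper_per[OF u] unfolding N_def by simp
  define K1 where "K1 = 2 + 2 * real (card R)"
  have K1: "K1 > 0" unfolding K1_def by simp
  have "(\<lambda>_. 0) \<in> Uiso00 R" unfolding Uiso00_iff by (rule exI[where x = 0]) simp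
  then have ne: "Uiso00 R \<noteq> {}" by blast
  define d where "d g = distR R (\<lambda>h. u (int g + h)) (Uiso00 R)" for g
  define Q where "Q g = (\<Sum>h\<in>R. (norm (u (int g + h) - u (int g)))\<^sup>2)" for g
  have d0: "d g \<ge> 0" for g unfolding d_def by (rule distR_nonneg[OF ne])
  have up: "(d g)\<^sup>2 \<le> Q g" for g
  proof -
    have w: "(\<lambda>_. u (int g)) \<in> Uiso00 R" unfolding Uiso00_iff by (rule exI[where x = "u (int g)"]) simp
    have "d g \<le> sqrt (Q g)" unfolding d_def Q_def using distR_le[OF w] by simp
    then show ?thesis using d0 sq_le_from_sqrt by blast
  qed
  have lo: "Q g \<le> K1 * (d g)\<^sup>2" for g
    unfolding d_def
  proof (rule distR_ge[OF ne])
    show "0 \<le> Q g" unfolding Q_def by (simp add: sum_nonneg)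
    show "0 < K1" by (rule K1)
    fix w assume "w \<in> Uiso00 R"
    then obtain a where a: "\<forall>h\<in>R. w h = a" unfolding Uiso00_iff by blast
    define T where "T = (\<Sum>h\<in>R. (norm (u (int g + h) - w h))\<^sup>2)"
    have T: "T = (\<Sum>h\<in>R. (norm (u (int g + h) - a))\<^sup>2)" unfolding T_def using a by simp
    have t0: "(norm (u (int g) - a))\<^sup>2 \<le> T"
    proof -
      have "(norm (u (int g + 0) - a))\<^sup>2 \<le> T" unfolding T
        by (rule member_le_sum[OF R0 _ fin]) simp
      then show ?thesis by simp
    qed
    have "Q g \<le> (\<Sum>h\<in>R. 2 * (norm (u (int g + h) - a))\<^sup>2 + 2 * (norm (u (int g) - a))\<^sup>2)"
      unfolding Q_def by (intro sum_mono norm_diff_sq_le)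
    also have "\<dots> = 2 * T + 2 * real (card R) * (norm (u (int g) - a))\<^sup>2"
      unfolding T by (simp add: sum.distrib sum_distrib_left)
    also have "\<dots> \<le> 2 * T + 2 * real (card R) * T" using t0 by (intro add_left_mono mult_left_mono) auto
    also have "\<dots> = K1 * T" unfolding K1_def by (simp add: algebra_simps)
    finally show "Q g \<le> K1 * (\<Sum>h\<in>R. (norm (u (int g + h) - w h))\<^sup>2)" unfolding T_def .
  qed
  have n00: "(normR00 R u)\<^sup>2 = (1 / real N) * (\<Sum>g<N. (d g)\<^sup>2)"
    unfolding normR00_def d_def N_def by (rule seminormU_sq[OF ne])
  have gr: "(gradnorm R u)\<^sup>2 = (1 / real N) * (\<Sum>g<N. Q g)"
    unfolding gradnorm_sq Q_def N_def by simp
  have a1: "(normR00 R u)\<^sup>2 \<le> (gradnorm R u)\<^sup>2"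
    unfolding n00 gr using N by (intro mult_left_mono sum_mono up) auto
  have a2: "(gradnorm R u)\<^sup>2 \<le> K1 * (normR00 R u)\<^sup>2"
  proof -
    have "(gradnorm R u)\<^sup>2 \<le> (1 / real N) * (\<Sum>g<N. K1 * (d g)\<^sup>2)"
      unfolding gr using N by (intro mult_left_mono sum_mono lo) auto
    also have "\<dots> = K1 * (normR00 R u)\<^sup>2" unfolding n00 by (simp add: sum_distrib_left)
    finally show ?thesis .
  qed
  have g0: "gradnorm R u \<ge> 0" unfolding gradnorm_def Let_def by (simp add: sum_nonneg)
  have n0: "normR00 R u \<ge> 0" unfolding normR00_def seminormU_def Let_def by (simp add: sum_nonneg)
  have "normR00 R u \<le> gradnorm R u" using a1 g0 by (rule power2_le_imp_le)
  moreover have "gradnorm R u \<le> sqrt K1 * normR00 R u"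
  proof (rule power2_le_imp_le)
    show "(gradnorm R u)\<^sup>2 \<le> (sqrt K1 * normR00 R u)\<^sup>2" using a2 K1 by (simp add: power_mult_distrib)
    show "0 \<le> sqrt K1 * normR00 R u" using n0 K1 by simp
  qed
  ultimately show ?thesis unfolding K1_def by simp
qed

lemma kj_range: "j < N \<Longrightarrow> 0 \<le> real j / real N \<and> real j / real N < 1"
  by (auto simp: divide_simps)

lemma grad_fourier:
  assumes u: "u \<in> Uper"
  shows "(gradnorm R u)\<^sup>2 = (\<Sum>j<per u. (\<Sum>h\<in>R. (dd (of_int h * (real j / real (per u))))\<^sup>2) * (AA u 1 j + AA u 2 j))"
proof -
  have AD: "(1 / real (per u)) * (\<Sum>g<per u. \<Sum>h\<in>R. (u (int g + h) $ i - u (int g) $ i)\<^sup>2)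
     = (\<Sum>j<per u. (\<Sum>h\<in>R. (dd (of_int h * (real j / real (per u))))\<^sup>2) * AA u i j)" for i
    using avg_detect[OF u, where R = R and i = i and t = "\<lambda>_. 0" and b = 0] by (simp add: norm_ee_minus_1)
  have "(gradnorm R u)\<^sup>2 = (1 / real (per u)) * (\<Sum>g<per u. \<Sum>h\<in>R. (u (int g + h) $ 1 - u (int g) $ 1)\<^sup>2)
      + (1 / real (per u)) * (\<Sum>g<per u. \<Sum>h\<in>R. (u (int g + h) $ 2 - u (int g) $ 2)\<^sup>2)"
    unfolding gradnorm_sq norm2_sq by (simp add: sum.distrib distrib_left)
  also have "\<dots> = (\<Sum>j<per u. (\<Sum>h\<in>R. (dd (of_int h * (real j / real (per u))))\<^sup>2) * (AA u 1 j + AA u 2 j))"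
    unfolding AD by (simp add: sum.distrib distrib_left)
  finally show ?thesis .
qed

lemma infsum2_fourier:
  assumes u: "u \<in> Uper"
  shows "infsum (\<lambda>k. (absk k)\<^sup>2 * (norm (uhat u k))\<^sup>2) Qk =
     (\<Sum>j<per u. (absk (real j / real (per u)))\<^sup>2 * (AA u 1 j + AA u 2 j))"
proof -
  have "infsum (\<lambda>k. (absk k)\<^sup>2 * (norm (uhat u k))\<^sup>2) Qk =
     (\<Sum>j<per u. (absk (real j / real (per u)))\<^sup>2 * (norm (uhat u (real j / real (per u))))\<^sup>2)"
    by (rule infsum_reduce[OF u]) simp
  also have "\<dots> = (\<Sum>j<per u. (absk (real j / real (per u)))\<^sup>2 * (AA u 1 j + AA u 2 j))"
    by (intro sum.cong refl) (simp add: norm2c_sq uhat_at[OF u])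
  finally show ?thesis .
qed

lemma infsum3_fourier:
  assumes u: "u \<in> Uper"
  shows "infsum (\<lambda>k. (absk k)^4 * (cmod (uhat u k $ 1))\<^sup>2 + (absk k)\<^sup>2 * (cmod (uhat u k $ 2))\<^sup>2) Qk =
     (\<Sum>j<per u. (absk (real j / real (per u)))^4 * AA u 1 j + (absk (real j / real (per u)))\<^sup>2 * AA u 2 j)"
proof -
  have "infsum (\<lambda>k. (absk k)^4 * (cmod (uhat u k $ 1))\<^sup>2 + (absk k)\<^sup>2 * (cmod (uhat u k $ 2))\<^sup>2) Qk =
     (\<Sum>j<per u. (absk (real j / real (per u)))^4 * (cmod (uhat u (real j / real (per u)) $ 1))\<^sup>2
        + (absk (real j / real (per u)))\<^sup>2 * (cmod (uhat u (real j / real (per u)) $ 2))\<^sup>2)"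
    by (rule infsum_reduce[OF u]) simp
  also have "\<dots> = (\<Sum>j<per u. (absk (real j / real (per u)))^4 * AA u 1 j + (absk (real j / real (per u)))\<^sup>2 * AA u 2 j)"
    by (intro sum.cong refl) (simp add: uhat_at[OF u])
  finally show ?thesis .
qed

lemma part2:
  assumes fin: "finite R" and sub: "R' \<subseteq> R" and bez: "(\<Sum>h\<in>R'. c h * h) = (1::int)" and u: "u \<in> Uper"
  shows "infsum (\<lambda>k. (absk k)\<^sup>2 * (norm (uhat u k))\<^sup>2) Qk \<le> ((\<Sum>h\<in>R'. (of_int (c h))\<^sup>2) + 1) * (gradnorm R u)\<^sup>2
    \<and> (gradnorm R u)\<^sup>2 \<le> ((\<Sum>h\<in>R. (of_int h)\<^sup>2) * (4 * pi\<^sup>2) + 1) * infsum (\<lambda>k. (absk k)\<^sup>2 * (norm (uhat u k))\<^sup>2) Qk"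
proof -
  define Kc where "Kc = (\<Sum>h\<in>R'. (of_int (c h) :: real)\<^sup>2)"
  define U2 where "U2 = (\<Sum>h\<in>R. (of_int h :: real)\<^sup>2) * (4 * pi\<^sup>2) + 1"
  define W where "W j = (\<Sum>h\<in>R. (dd (of_int h * (real j / real (per u))))\<^sup>2)" for j
  define A where "A j = AA u 1 j + AA u 2 j" for j
  define a where "a j = absk (real j / real (per u))" for j
  have A0: "A j \<ge> 0" for j unfolding A_def by simp
  have l: "(a j)\<^sup>2 \<le> (Kc + 1) * W j" if "j < per u" for j
    unfolding a_def Kc_def W_def using kj_range[OF that] by (intro mult2_lower[OF fin sub bez]) auto
  have r: "W j \<le> U2 * (a j)\<^sup>2" if "j < per u" for j
  proof -
    have "W j \<le> (\<Sum>h\<in>R. (of_int h)\<^sup>2) * (4 * pi\<^sup>2) * (a j)\<^sup>2"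
      unfolding W_def a_def using kj_range[OF that] by (intro mult2_upper) auto
    also have "\<dots> \<le> U2 * (a j)\<^sup>2" unfolding U2_def by (simp add: distrib_right)
    finally show ?thesis .
  qed
  have G: "(gradnorm R u)\<^sup>2 = (\<Sum>j<per u. W j * A j)" unfolding W_def A_def by (rule grad_fourier[OF u])
  have I: "infsum (\<lambda>k. (absk k)\<^sup>2 * (norm (uhat u k))\<^sup>2) Qk = (\<Sum>j<per u. (a j)\<^sup>2 * A j)"
    unfolding a_def A_def by (rule infsum2_fourier[OF u])
  have "(\<Sum>j<per u. (a j)\<^sup>2 * A j) \<le> (\<Sum>j<per u. ((Kc + 1) * W j) * A j)"
    using l A0 by (intro sum_mono mult_right_mono) auto
  also have "\<dots> = (Kc + 1) * (\<Sum>j<per u. W j * A j)" by (simp add: sum_distrib_left mult.assoc)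
  finally have 1: "(\<Sum>j<per u. (a j)\<^sup>2 * A j) \<le> (Kc + 1) * (\<Sum>j<per u. W j * A j)" .
  have "(\<Sum>j<per u. W j * A j) \<le> (\<Sum>j<per u. (U2 * (a j)\<^sup>2) * A j)"
    using r A0 by (intro sum_mono mult_right_mono) auto
  also have "\<dots> = U2 * (\<Sum>j<per u. (a j)\<^sup>2 * A j)" by (simp add: sum_distrib_left mult.assoc)
  finally have 2: "(\<Sum>j<per u. W j * A j) \<le> U2 * (\<Sum>j<per u. (a j)\<^sup>2 * A j)" .
  show ?thesis using 1 2 unfolding G I Kc_def U2_def by simp
qed

lemma sq3_le: "(p + q + r :: real)\<^sup>2 \<le> 3 * (p\<^sup>2 + q\<^sup>2 + r\<^sup>2)"
proof -
  have "0 \<le> (p - q)\<^sup>2 + (q - r)\<^sup>2 + (p - r)\<^sup>2" by simp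
  then show ?thesis by (simp add: power2_eq_square algebra_simps)
qed

lemma comp_sq_le: "((x :: real^2) $ i)\<^sup>2 \<le> (norm x)\<^sup>2"
  using component_le_norm_cart[of x i] by (metis abs_le_square_iff abs_norm_cancel)

lemma part3:
  fixes b :: int
  assumes fin: "finite R" and R0: "0 \<in> R" and sub: "R' \<subseteq> R" and shift: "\<forall>h\<in>R'. h + b \<in> R"
    and b: "b \<noteq> 0" and bR: "b \<in> R" and bez: "(\<Sum>h\<in>R'. c h * h) = (1::int)" and u: "u \<in> Uper"
  shows "(normR R u)\<^sup>2 \<le> ((\<Sum>h\<in>R. (of_int h)^4) * (16 * pi^4) + (\<Sum>h\<in>R. (of_int h)\<^sup>2) * (4 * pi\<^sup>2) + 1)
          * infsum (\<lambda>k. (absk k)^4 * (cmod (uhat u k $ 1))\<^sup>2 + (absk k)\<^sup>2 * (cmod (uhat u k $ 2))\<^sup>2) Qk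
    \<and> infsum (\<lambda>k. (absk k)^4 * (cmod (uhat u k $ 1))\<^sup>2 + (absk k)\<^sup>2 * (cmod (uhat u k $ 2))\<^sup>2) Qk
       \<le> max ((((\<Sum>h\<in>R'. (of_int (c h))\<^sup>2) + 1)\<^sup>2 * (8 * real (card R') + 8 * (\<Sum>h\<in>R'. (of_int h / of_int b)\<^sup>2)) + 1))
              ((\<Sum>h\<in>R'. (of_int (c h))\<^sup>2) + 1)
          * (3 * (\<Sum>h\<in>R. 1 + (1 - of_int h / of_int b)\<^sup>2 + (of_int h / of_int b)\<^sup>2) + 4 * real (card R) + 1)
          * (normR R u)\<^sup>2"
proof -
  define N where "N = per u"
  have N: "N > 0" using Uper_per[OF u] unfolding N_def by simp
  define Kc where "Kc = (\<Sum>h\<in>R'. (of_int (c h) :: real)\<^sup>2)"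
  define Cm where "Cm = ((Kc + 1)\<^sup>2 * (8 * real (card R') + 8 * (\<Sum>h\<in>R'. (of_int h / of_int b :: real)\<^sup>2)) + 1)"
  define U3 where "U3 = (\<Sum>h\<in>R. (of_int h :: real)^4) * (16 * pi^4) + (\<Sum>h\<in>R. (of_int h :: real)\<^sup>2) * (4 * pi\<^sup>2) + 1"
  define C3 where "C3 = 3 * (\<Sum>h\<in>R. 1 + (1 - of_int h / of_int b :: real)\<^sup>2 + (of_int h / of_int b)\<^sup>2) + 4 * real (card R) + 1"
  define I3 where "I3 = infsum (\<lambda>k. (absk k)^4 * (cmod (uhat u k $ 1))\<^sup>2 + (absk k)\<^sup>2 * (cmod (uhat u k $ 2))\<^sup>2) Qk"
  define kk where "kk j = real j / real N" for j
  define a where "a j = absk (kk j)" for j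
  define W where "W j = (\<Sum>h\<in>R. (dd (of_int h * kk j))\<^sup>2)" for j
  define S1 where "S1 j = (\<Sum>h\<in>R. (cmod (mult h (of_int h) 1 (kk j)))\<^sup>2)" for j
  define S3 where "S3 j = (\<Sum>h\<in>R. (cmod (mult h (of_int h / of_int b) b (kk j)))\<^sup>2)" for j
  have A10: "AA u 1 j \<ge> 0" and A20: "AA u 2 j \<ge> 0" for j by simp_all
  have ne: "Uiso R \<noteq> {}" using Uiso_witness by blast
  define d where "d g = distR R (\<lambda>h. u (int g + h)) (Uiso R)" for g
  have d0: "d g \<ge> 0" for g unfolding d_def by (rule distR_nonneg[OF ne])
  have nR: "(normR R u)\<^sup>2 = (1 / real N) * (\<Sum>g<N. (d g)\<^sup>2)"
    unfolding normR_def d_def N_def by (rule seminormU_sq[OF ne])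
  have I3: "I3 = (\<Sum>j<N. (a j)^4 * AA u 1 j + (a j)\<^sup>2 * AA u 2 j)"
    unfolding I3_def a_def kk_def N_def by (rule infsum3_fourier[OF u])
  define Q1 where "Q1 g = (\<Sum>h\<in>R. (u (int g + h) $ 1 - u (int g) $ 1 - of_int h * (u (int g + 1) $ 1 - u (int g) $ 1))\<^sup>2)" for g
  define Q2 where "Q2 g = (\<Sum>h\<in>R. (u (int g + h) $ 2 - u (int g) $ 2)\<^sup>2)" for g
  define L1 where "L1 g = (\<Sum>h\<in>R. (u (int g + h) $ 1 - u (int g) $ 1 - (of_int h / of_int b) * (u (int g + b) $ 1 - u (int g) $ 1))\<^sup>2)" for g
  have avgQ1: "(1 / real N) * (\<Sum>g<N. Q1 g) = (\<Sum>j<N. S1 j * AA u 1 j)"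
    unfolding Q1_def S1_def kk_def N_def using avg_detect[OF u, where R = R and i = 1 and t = "\<lambda>h. of_int h" and b = 1] by simp
  have avgQ2: "(1 / real N) * (\<Sum>g<N. Q2 g) = (\<Sum>j<N. W j * AA u 2 j)"
    unfolding Q2_def W_def kk_def N_def using avg_detect[OF u, where R = R and i = 2 and t = "\<lambda>_. 0" and b = 0] by (simp add: norm_ee_minus_1)
  have avgL1: "(1 / real N) * (\<Sum>g<N. L1 g) = (\<Sum>j<N. S3 j * AA u 1 j)"
    unfolding L1_def S3_def kk_def N_def using avg_detect[OF u, where R = R and i = 1 and t = "\<lambda>h. of_int h / of_int b" and b = b] by simp
  have k01: "0 \<le> kk j" "kk j < 1" if "j < N" for j using kj_range[OF that] unfolding kk_def by auto
  have dup: "(d g)\<^sup>2 \<le> Q1 g + Q2 g" for g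
  proof -
    define \<beta> where "\<beta> = u (int g + 1) $ 1 - u (int g) $ 1"
    have w: "(\<lambda>h. vector [u (int g) $ 1 + \<beta> * of_int h, u (int g) $ 2] :: real^2) \<in> Uiso R" by (rule Uiso_witness)
    have "d g \<le> sqrt (\<Sum>h\<in>R. (norm (u (int g + h) - vector [u (int g) $ 1 + \<beta> * of_int h, u (int g) $ 2]))\<^sup>2)"
      unfolding d_def using distR_le[OF w] by simp
    also have "(\<Sum>h\<in>R. (norm (u (int g + h) - vector [u (int g) $ 1 + \<beta> * of_int h, u (int g) $ 2]))\<^sup>2) = Q1 g + Q2 g"
      unfolding Q1_def Q2_def \<beta>_def[symmetric] norm2_sq sum.distrib[symmetric]
      by (intro sum.cong refl) (simp add: algebra_simps)
    finally show ?thesis using d0 sq_le_from_sqrt by blast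
  qed
  have S1b: "S1 j \<le> (\<Sum>h\<in>R. (of_int h :: real)^4) * (16 * pi^4) * (a j)^4" if "j < N" for j
  proof -
    have "S1 j \<le> (\<Sum>h\<in>R. (of_int h :: real)^4 * (16 * pi^4 * (a j)^4))"
      unfolding S1_def
    proof (rule sum_mono)
      fix h :: int
      have "cmod (mult h (of_int h) 1 (kk j)) \<le> (of_int h)\<^sup>2 * (dd (kk j))\<^sup>2"
        using P_bound[of h "kk j"] by simp
      then have "(cmod (mult h (of_int h) 1 (kk j)))\<^sup>2 \<le> ((of_int h)\<^sup>2 * (dd (kk j))\<^sup>2)\<^sup>2"
        by (intro power_mono) auto
      also have "\<dots> = (of_int h)^4 * ((dd (kk j))\<^sup>2)\<^sup>2" by (simp add: power_mult_distrib flip: power_mult)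
      also have "\<dots> \<le> (of_int h)^4 * (4 * pi\<^sup>2 * (a j)\<^sup>2)\<^sup>2"
        using dd_absk(2)[OF k01[OF that]] unfolding a_def by (intro mult_left_mono power_mono) auto
      also have "\<dots> = (of_int h)^4 * (16 * pi^4 * (a j)^4)" by (simp add: power_mult_distrib flip: power_mult)
      finally show "(cmod (mult h (of_int h) 1 (kk j)))\<^sup>2 \<le> (of_int h)^4 * (16 * pi^4 * (a j)^4)" .
    qed
    then show ?thesis by (simp add: sum_distrib_right mult.assoc)
  qed
  have Wb: "W j \<le> (\<Sum>h\<in>R. (of_int h :: real)\<^sup>2) * (4 * pi\<^sup>2) * (a j)\<^sup>2" if "j < N" for j
    unfolding W_def a_def using k01[OF that] by (intro mult2_upper) auto
  have upper: "(normR R u)\<^sup>2 \<le> U3 * I3"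
  proof -
    have "(normR R u)\<^sup>2 \<le> (1 / real N) * (\<Sum>g<N. Q1 g + Q2 g)"
      unfolding nR using N by (intro mult_left_mono sum_mono dup) auto
    also have "\<dots> = (\<Sum>j<N. S1 j * AA u 1 j + W j * AA u 2 j)"
      using avgQ1 avgQ2 by (simp add: sum.distrib distrib_left)
    also have "\<dots> \<le> (\<Sum>j<N. U3 * ((a j)^4 * AA u 1 j + (a j)\<^sup>2 * AA u 2 j))"
    proof (rule sum_mono)
      fix j assume j: "j \<in> {..<N}"
      have s4: "(\<Sum>h\<in>R. (of_int h :: real)^4) \<ge> 0" by (simp add: sum_nonneg)
      have s2: "(\<Sum>h\<in>R. (of_int h :: real)\<^sup>2) \<ge> 0" by (simp add: sum_nonneg)
      have "S1 j \<le> U3 * (a j)^4"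
      proof -
        have "S1 j \<le> (\<Sum>h\<in>R. (of_int h :: real)^4) * (16 * pi^4) * (a j)^4" using S1b j by simp
        also have "\<dots> \<le> U3 * (a j)^4" unfolding U3_def using s2 by (intro mult_right_mono) auto
        finally show ?thesis .
      qed
      moreover have "W j \<le> U3 * (a j)\<^sup>2"
      proof -
        have "W j \<le> (\<Sum>h\<in>R. (of_int h :: real)\<^sup>2) * (4 * pi\<^sup>2) * (a j)\<^sup>2" using Wb j by simp
        also have "\<dots> \<le> U3 * (a j)\<^sup>2" unfolding U3_def using s4 by (intro mult_right_mono) auto
        finally show ?thesis .
      qed
      ultimately have "S1 j * AA u 1 j + W j * AA u 2 j \<le> (U3 * (a j)^4) * AA u 1 j + (U3 * (a j)\<^sup>2) * AA u 2 j"
        by (intro add_mono mult_right_mono) auto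
      then show "S1 j * AA u 1 j + W j * AA u 2 j \<le> U3 * ((a j)^4 * AA u 1 j + (a j)\<^sup>2 * AA u 2 j)"
        by (simp add: algebra_simps)
    qed
    also have "\<dots> = U3 * I3" unfolding I3 by (simp add: sum_distrib_left)
    finally show ?thesis .
  qed
  have dlo: "L1 g + Q2 g \<le> C3 * (d g)\<^sup>2" for g
    unfolding d_def
  proof (rule distR_ge[OF ne])
    show "0 \<le> L1 g + Q2 g" unfolding L1_def Q2_def by (simp add: sum_nonneg)
    have "0 \<le> (\<Sum>h\<in>R. 1 + (1 - of_int h / of_int b :: real)\<^sup>2 + (of_int h / of_int b)\<^sup>2)"
      by (intro sum_nonneg) (simp add: add_nonneg_nonneg)
    then show "0 < C3" unfolding C3_def by simp
    fix w assume "w \<in> Uiso R"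
    then obtain \<alpha> \<beta> \<gamma> where w: "\<forall>h\<in>R. w h $ 1 = \<alpha> + \<beta> * of_int h \<and> w h $ 2 = \<gamma>" using Uiso_char by blast
    define T where "T = (\<Sum>h\<in>R. (norm (u (int g + h) - w h))\<^sup>2)"
    define r where "r h = u (int g + h) - w h" for h
    have rT: "(r h $ i)\<^sup>2 \<le> T" if "h \<in> R" for h i
    proof -
      have "(r h $ i)\<^sup>2 \<le> (norm (r h))\<^sup>2" by (rule comp_sq_le)
      also have "\<dots> \<le> T" unfolding T_def r_def by (rule member_le_sum[OF that _ fin]) simp
      finally show ?thesis .
    qed
    have t1: "(u (int g + h) $ 1 - u (int g) $ 1 - (of_int h / of_int b) * (u (int g + b) $ 1 - u (int g) $ 1))\<^sup>2
        \<le> 3 * (1 + (1 - of_int h / of_int b)\<^sup>2 + (of_int h / of_int b)\<^sup>2) * T" if h: "h \<in> R" for h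
    proof -
      define t where "t = (of_int h / of_int b :: real)"
      have tb: "t * of_int b = of_int h" unfolding t_def using b by simp
      have e: "u (int g + h) $ 1 - u (int g) $ 1 - t * (u (int g + b) $ 1 - u (int g) $ 1)
          = r h $ 1 + (- (1 - t)) * r 0 $ 1 + (- t) * r b $ 1"
      proof -
        have "u (int g + h) $ 1 = r h $ 1 + \<alpha> + \<beta> * of_int h" unfolding r_def using w h by simp
        moreover have "u (int g) $ 1 = r 0 $ 1 + \<alpha>" unfolding r_def using w R0 by (metis add.right_neutral add_cancel_right_right mult_zero_right of_int_0 vector_minus_component diff_add_cancel)
        moreover have "u (int g + b) $ 1 = r b $ 1 + \<alpha> + \<beta> * of_int b" unfolding r_def using w bR by simp
        ultimately show ?thesis using tb by (simp add: algebra_simps)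
      qed
      have "(u (int g + h) $ 1 - u (int g) $ 1 - t * (u (int g + b) $ 1 - u (int g) $ 1))\<^sup>2
          \<le> 3 * ((r h $ 1)\<^sup>2 + ((- (1 - t)) * r 0 $ 1)\<^sup>2 + ((- t) * r b $ 1)\<^sup>2)"
        unfolding e by (rule sq3_le)
      also have "\<dots> = 3 * ((r h $ 1)\<^sup>2 + (1 - t)\<^sup>2 * (r 0 $ 1)\<^sup>2 + t\<^sup>2 * (r b $ 1)\<^sup>2)"
        by (simp add: power_mult_distrib power2_commute)
      also have "\<dots> \<le> 3 * (T + (1 - t)\<^sup>2 * T + t\<^sup>2 * T)"
        using rT[OF h] rT[OF R0] rT[OF bR] by (intro mult_left_mono add_mono mult_left_mono) auto
      also have "\<dots> = 3 * (1 + (1 - t)\<^sup>2 + t\<^sup>2) * T" by (simp add: algebra_simps)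
      finally show ?thesis unfolding t_def .
    qed
    have t2: "(u (int g + h) $ 2 - u (int g) $ 2)\<^sup>2 \<le> 4 * T" if h: "h \<in> R" for h
    proof -
      have e: "u (int g + h) $ 2 - u (int g) $ 2 = r h $ 2 + (- 1) * r 0 $ 2"
        unfolding r_def using w h R0 by simp
      have "(r h $ 2 + (- 1) * r 0 $ 2)\<^sup>2 \<le> 2 * (r h $ 2)\<^sup>2 + 2 * ((- 1) * r 0 $ 2)\<^sup>2" by (rule sq_sum_le)
      also have "\<dots> \<le> 2 * T + 2 * T" using rT[OF h, of 2] rT[OF R0, of 2] by simp
      finally show ?thesis unfolding e by simp
    qed
    have "L1 g + Q2 g \<le> (\<Sum>h\<in>R. 3 * (1 + (1 - of_int h / of_int b)\<^sup>2 + (of_int h / of_int b)\<^sup>2) * T) + (\<Sum>h\<in>R. 4 * T)"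
      unfolding L1_def Q2_def by (intro add_mono sum_mono t1 t2)
    also have "\<dots> = (3 * (\<Sum>h\<in>R. 1 + (1 - of_int h / of_int b)\<^sup>2 + (of_int h / of_int b)\<^sup>2) + 4 * real (card R)) * T"
      by (simp add: sum_distrib_left sum_distrib_right algebra_simps)
    also have "\<dots> \<le> C3 * T" unfolding C3_def T_def by (intro mult_right_mono) (auto simp: sum_nonneg)
    finally show "L1 g + Q2 g \<le> C3 * (\<Sum>h\<in>R. (norm (u (int g + h) - w h))\<^sup>2)" unfolding T_def .
  qed
  have S3b: "(a j)^4 \<le> Cm * S3 j" if "j < N" for j
    unfolding a_def Cm_def Kc_def S3_def using k01[OF that] by (intro mult3_lower[OF fin sub shift b bez]) auto
  have Wl: "(a j)\<^sup>2 \<le> (Kc + 1) * W j" if "j < N" for j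
    unfolding a_def Kc_def W_def using k01[OF that] by (intro mult2_lower[OF fin sub bez]) auto
  have Kc0: "Kc \<ge> 0" unfolding Kc_def by (simp add: sum_nonneg)
  have mx: "0 \<le> max Cm (Kc + 1)" using Kc0 by (simp add: le_max_iff_disj)
  have lower: "I3 \<le> max Cm (Kc + 1) * C3 * (normR R u)\<^sup>2"
  proof -
    have "I3 \<le> (\<Sum>j<N. max Cm (Kc + 1) * (S3 j * AA u 1 j + W j * AA u 2 j))"
      unfolding I3
    proof (rule sum_mono)
      fix j assume "j \<in> {..<N}"
      then have j: "j < N" by simp
      have "(a j)^4 \<le> max Cm (Kc + 1) * S3 j"
        using S3b[OF j] by (smt (verit) S3_def mult_right_mono max.cobounded1 sum_nonneg zero_le_power2)
      moreover have "(a j)\<^sup>2 \<le> max Cm (Kc + 1) * W j"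
        using Wl[OF j] by (smt (verit) W_def mult_right_mono max.cobounded2 sum_nonneg zero_le_power2)
      ultimately have "(a j)^4 * AA u 1 j + (a j)\<^sup>2 * AA u 2 j \<le> (max Cm (Kc + 1) * S3 j) * AA u 1 j + (max Cm (Kc + 1) * W j) * AA u 2 j"
        by (intro add_mono mult_right_mono) auto
      then show "(a j)^4 * AA u 1 j + (a j)\<^sup>2 * AA u 2 j \<le> max Cm (Kc + 1) * (S3 j * AA u 1 j + W j * AA u 2 j)"
        by (simp add: algebra_simps)
    qed
    also have "\<dots> = max Cm (Kc + 1) * ((1 / real N) * (\<Sum>g<N. L1 g + Q2 g))"
      using avgL1 avgQ2 by (simp add: sum.distrib distrib_left sum_distrib_left)
    also have "\<dots> \<le> max Cm (Kc + 1) * ((1 / real N) * (\<Sum>g<N. C3 * (d g)\<^sup>2))"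
      using N dlo mx by (intro mult_left_mono sum_mono) auto
    also have "\<dots> = max Cm (Kc + 1) * C3 * (normR R u)\<^sup>2" unfolding nR by (simp add: sum_distrib_left mult.assoc)
    finally show ?thesis .
  qed
  show ?thesis using upper lower unfolding U3_def I3_def Cm_def Kc_def C3_def by simp
qed

lemma scale_helper:
  fixes X Y a M :: real
  assumes "X \<le> a * Y" "0 \<le> Y" "a \<le> M" "0 < M"
  shows "X \<le> M * Y" "(1 / M) * X \<le> Y"
proof -
  have "a * Y \<le> M * Y" using assms by (intro mult_right_mono) auto
  then show "X \<le> M * Y" using assms by simp
  then show "(1 / M) * X \<le> Y" using assms by (simp add: divide_simps mult.commute)
qed

theorem proposition5p1:
  fixes R :: "int set"
  assumes "Property2 R"
  shows "\<exists>c C. c > 0 \<and> C > 0 \<and>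
    (\<forall>u\<in>Uper. c * gradnorm R u \<le> normR00 R u \<and> normR00 R u \<le> C * gradnorm R u) \<and>
    (\<forall>u\<in>Uper.
       c * (gradnorm R u)\<^sup>2 \<le> infsum (\<lambda>k. (absk k)\<^sup>2 * (norm (uhat u k))\<^sup>2) Qk \<and>
       infsum (\<lambda>k. (absk k)\<^sup>2 * (norm (uhat u k))\<^sup>2) Qk \<le> C * (gradnorm R u)\<^sup>2) \<and>
    (\<forall>u\<in>Uper.
       c * (normR R u)\<^sup>2 \<le> infsum (\<lambda>k. (absk k)^4 * (cmod (uhat u k $ 1))\<^sup>2
                                        + (absk k)\<^sup>2 * (cmod (uhat u k $ 2))\<^sup>2) Qk \<and>
       infsum (\<lambda>k. (absk k)^4 * (cmod (uhat u k $ 1))\<^sup>2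
                    + (absk k)\<^sup>2 * (cmod (uhat u k $ 2))\<^sup>2) Qk \<le> C * (normR R u)\<^sup>2)"
proof -
  obtain R' b c where fin: "finite R" and R0: "0 \<in> R" and sub: "R' \<subseteq> R" and shift: "\<forall>h\<in>R'. h + b \<in> R"
    and b: "b \<noteq> 0" and bR: "b \<in> R" and bez: "(\<Sum>h\<in>R'. c h * h) = (1::int)"
    using prop2_data[OF assms] by blast
  define sK where "sK = sqrt (2 + 2 * real (card R))"
  define Kc where "Kc = (\<Sum>h\<in>R'. (of_int (c h) :: real)\<^sup>2)"
  define U2 where "U2 = (\<Sum>h\<in>R. (of_int h :: real)\<^sup>2) * (4 * pi\<^sup>2) + 1"
  define U3 where "U3 = (\<Sum>h\<in>R. (of_int h :: real)^4) * (16 * pi^4) + (\<Sum>h\<in>R. (of_int h :: real)\<^sup>2) * (4 * pi\<^sup>2) + 1"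
  define Cm where "Cm = ((Kc + 1)\<^sup>2 * (8 * real (card R') + 8 * (\<Sum>h\<in>R'. (of_int h / of_int b :: real)\<^sup>2)) + 1)"
  define C3 where "C3 = 3 * (\<Sum>h\<in>R. 1 + (1 - of_int h / of_int b :: real)\<^sup>2 + (of_int h / of_int b)\<^sup>2) + 4 * real (card R) + 1"
  define L where "L = max Cm (Kc + 1) * C3"
  define M where "M = sK + (Kc + 1) + U2 + U3 + L + 1"
  have sK0: "sK \<ge> 0" unfolding sK_def by simp
  have Kc0: "Kc \<ge> 0" unfolding Kc_def by (simp add: sum_nonneg)
  have U20: "U2 \<ge> 0" unfolding U2_def by (simp add: sum_nonneg)
  have U30: "U3 \<ge> 0" unfolding U3_def by (simp add: sum_nonneg)
  have C30: "C3 \<ge> 0"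
  proof -
    have "0 \<le> (\<Sum>h\<in>R. 1 + (1 - of_int h / of_int b :: real)\<^sup>2 + (of_int h / of_int b)\<^sup>2)"
      by (intro sum_nonneg) (simp add: add_nonneg_nonneg)
    then show ?thesis unfolding C3_def by simp
  qed
  have L0: "L \<ge> 0" unfolding L_def using Kc0 C30 by (intro mult_nonneg_nonneg) (auto simp: le_max_iff_disj)
  have M0: "M > 0" and M1: "1 \<le> M" and MsK: "sK \<le> M" and MKc: "Kc + 1 \<le> M" and MU2: "U2 \<le> M"
    and MU3: "U3 \<le> M" and MbL: "L \<le> M"
    unfolding M_def using sK0 Kc0 U20 U30 L0 by auto
  have Q1: "\<forall>u\<in>Uper. 1 / M * gradnorm R u \<le> normR00 R u \<and> normR00 R u \<le> M * gradnorm R u"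
  proof (intro ballI conjI)
    fix u assume u: "u \<in> Uper"
    have p1: "normR00 R u \<le> gradnorm R u \<and> gradnorm R u \<le> sK * normR00 R u"
      unfolding sK_def by (rule part1[OF fin R0 u])
    have n0: "normR00 R u \<ge> 0" unfolding normR00_def seminormU_def Let_def by (simp add: sum_nonneg)
    have g0: "gradnorm R u \<ge> 0" unfolding gradnorm_def Let_def by (simp add: sum_nonneg)
    show "1 / M * gradnorm R u \<le> normR00 R u" using scale_helper(2)[of _ sK] p1 n0 MsK M0 by blast
    show "normR00 R u \<le> M * gradnorm R u" using scale_helper(1)[of _ 1] p1 g0 M1 M0 by simp
  qed
  have Q2: "\<forall>u\<in>Uper. 1 / M * (gradnorm R u)\<^sup>2 \<le> infsum (\<lambda>k. (absk k)\<^sup>2 * (norm (uhat u k))\<^sup>2) Qk \<and>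
       infsum (\<lambda>k. (absk k)\<^sup>2 * (norm (uhat u k))\<^sup>2) Qk \<le> M * (gradnorm R u)\<^sup>2"
  proof (intro ballI conjI)
    fix u assume u: "u \<in> Uper"
    have p2: "infsum (\<lambda>k. (absk k)\<^sup>2 * (norm (uhat u k))\<^sup>2) Qk \<le> (Kc + 1) * (gradnorm R u)\<^sup>2
      \<and> (gradnorm R u)\<^sup>2 \<le> U2 * infsum (\<lambda>k. (absk k)\<^sup>2 * (norm (uhat u k))\<^sup>2) Qk"
      unfolding Kc_def U2_def by (rule part2[OF fin sub bez u])
    have I0: "infsum (\<lambda>k. (absk k)\<^sup>2 * (norm (uhat u k))\<^sup>2) Qk \<ge> 0"
      unfolding infsum2_fourier[OF u] by (simp add: sum_nonneg)
    show "1 / M * (gradnorm R u)\<^sup>2 \<le> infsum (\<lambda>k. (absk k)\<^sup>2 * (norm (uhat u k))\<^sup>2) Qk"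
      using scale_helper(2)[of _ U2] p2 I0 MU2 M0 by blast
    show "infsum (\<lambda>k. (absk k)\<^sup>2 * (norm (uhat u k))\<^sup>2) Qk \<le> M * (gradnorm R u)\<^sup>2"
      using scale_helper(1)[of _ "Kc + 1"] p2 MKc M0 by simp
  qed
  have Q3: "\<forall>u\<in>Uper. 1 / M * (normR R u)\<^sup>2 \<le> infsum (\<lambda>k. (absk k)^4 * (cmod (uhat u k $ 1))\<^sup>2
                                        + (absk k)\<^sup>2 * (cmod (uhat u k $ 2))\<^sup>2) Qk \<and>
       infsum (\<lambda>k. (absk k)^4 * (cmod (uhat u k $ 1))\<^sup>2
                    + (absk k)\<^sup>2 * (cmod (uhat u k $ 2))\<^sup>2) Qk \<le> M * (normR R u)\<^sup>2"
  proof (intro ballI conjI)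
    fix u assume u: "u \<in> Uper"
    have p3: "(normR R u)\<^sup>2 \<le> U3 * infsum (\<lambda>k. (absk k)^4 * (cmod (uhat u k $ 1))\<^sup>2 + (absk k)\<^sup>2 * (cmod (uhat u k $ 2))\<^sup>2) Qk
      \<and> infsum (\<lambda>k. (absk k)^4 * (cmod (uhat u k $ 1))\<^sup>2 + (absk k)\<^sup>2 * (cmod (uhat u k $ 2))\<^sup>2) Qk \<le> L * (normR R u)\<^sup>2"
      unfolding U3_def L_def Cm_def Kc_def C3_def by (rule part3[OF fin R0 sub shift b bR bez u])
    have I0: "infsum (\<lambda>k. (absk k)^4 * (cmod (uhat u k $ 1))\<^sup>2 + (absk k)\<^sup>2 * (cmod (uhat u k $ 2))\<^sup>2) Qk \<ge> 0"
      unfolding infsum3_fourier[OF u] by (simp add: sum_nonneg)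
    show "1 / M * (normR R u)\<^sup>2 \<le> infsum (\<lambda>k. (absk k)^4 * (cmod (uhat u k $ 1))\<^sup>2 + (absk k)\<^sup>2 * (cmod (uhat u k $ 2))\<^sup>2) Qk"
      using scale_helper(2)[of _ U3] p3 I0 MU3 M0 by blast
    show "infsum (\<lambda>k. (absk k)^4 * (cmod (uhat u k $ 1))\<^sup>2 + (absk k)\<^sup>2 * (cmod (uhat u k $ 2))\<^sup>2) Qk \<le> M * (normR R u)\<^sup>2"
      using scale_helper(1)[of _ L] p3 MbL M0 by simp
  qed
  have c0: "0 < 1 / M" using M0 by simp
  show ?thesis
    by (rule exI[of _ "1 / M"], rule exI[of _ M]) (use c0 M0 Q1 Q2 Q3 in blast)
qed

end
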